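(* For each pair of integers $k\ge l\ge0$, $S_u^{k-l+1}$ annihilates $\mathcal{H}_{k,l}(\mathbb{R}^{2m},\mathbb{C})$, whereas for every integer $0\le j\le k-l$ the operator $S_u^j$ is not identically zero on $\mathcal{H}_{k,l}(\mathbb{R}^{2m},\mathbb{C})$.
   Context: Fix an integer $m>4$. For $x,u\in\mathbb{R}^m$ let $\mathcal{P}_{p,q}(\mathbb{R}^{2m},\mathbb{C})$ be complex polynomials of degree $p$ in $x$ and $q$ in $u$. Write $|x|^2=\sum x_j^2$, $|u|^2$ similarly, $\Delta_x=\sum\partial_{x_j}^2$, $\Delta_u=\sum\partial_{u_j}^2$, $\langle\partial_u,\partial_x\rangle=\sum\partial_{u_j}\partial_{x_j}$, $\langle x,\partial_u\rangle=\sum x_j\partial_{u_j}$, $\langle u,\partial_x\rangle=\sum u_j\partial_{x_j}$, $\ker(D_1,\dots,D_r)=\bigcap\ker D_i$. Every $P\in\mathcal{P}_{p,q}$ is uniquely $\sum_{a,b\ge0}|x|^{2a}|u|^{2b}H'_{p-2a,q-2b}$ with $H'_{p-2a,q-2b}\in\mathcal{P}_{p-2a,q-2b}\cap\ker(\Delta_x,\Delta_u)$; $\pi_{\mathfrak{s}}P:=H'_{p,q}$. $S_u=\pi_{\mathfrak{s}}\langle u,\partial_x\rangle$ on $\ker(\Delta_x,\Delta_u)$. For $k\ge l\ge0$, $\mathcal{H}_{k,l}=\mathcal{P}_{k,l}\cap\ker(\Delta_x,\Delta_u,\langle\partial_u,\partial_x\rangle,\langle x,\partial_u\rangle)$. 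*)

theory Defs
  imports Complex_Main "HOL-Library.Poly_Mapping" "HOL-Library.Function_Algebras"
begin

text \<open>Complex polynomials in the 2m real variables x_1..x_m, u_1..u_m, represented by their
coefficient function on monomials. Variable Inl j stands for x_(j+1), Inr j for u_(j+1) (j < m).\<close>

type_synonym mono = "(nat + nat) \<Rightarrow>\<^sub>0 nat"
type_synonym cpoly = "mono \<Rightarrow> complex"

definition xdeg :: "nat \<Rightarrow> mono \<Rightarrow> nat" where
  "xdeg m \<alpha> = (\<Sum>j<m. Poly_Mapping.lookup \<alpha> (Inl j))"

definition udeg :: "nat \<Rightarrow> mono \<Rightarrow> nat" where
  "udeg m \<alpha> = (\<Sum>j<m. Poly_Mapping.lookup \<alpha> (Inr j))"

definition Pspace :: "nat \<Rightarrow> nat \<Rightarrow> nat \<Rightarrow> cpoly set" where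
  "Pspace m p q = {P. finite {\<alpha>. P \<alpha> \<noteq> 0} \<and>
     (\<forall>\<alpha>. P \<alpha> \<noteq> 0 \<longrightarrow> Poly_Mapping.keys \<alpha> \<subseteq> Inl ` {..<m} \<union> Inr ` {..<m} \<and> xdeg m \<alpha> = p \<and> udeg m \<alpha> = q)}"

definition pderiv_var :: "nat + nat \<Rightarrow> cpoly \<Rightarrow> cpoly" where
  "pderiv_var v P = (\<lambda>\<alpha>. of_nat (Poly_Mapping.lookup \<alpha> v + 1) * P (\<alpha> + Poly_Mapping.single v 1))"

definition mult_var :: "nat + nat \<Rightarrow> cpoly \<Rightarrow> cpoly" where
  "mult_var v P = (\<lambda>\<alpha>. if 0 < Poly_Mapping.lookup \<alpha> v then P (\<alpha> - Poly_Mapping.single v 1) else 0)"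

definition Delta_x :: "nat \<Rightarrow> cpoly \<Rightarrow> cpoly" where
  "Delta_x m P = (\<Sum>j<m. pderiv_var (Inl j) (pderiv_var (Inl j) P))"

definition Delta_u :: "nat \<Rightarrow> cpoly \<Rightarrow> cpoly" where
  "Delta_u m P = (\<Sum>j<m. pderiv_var (Inr j) (pderiv_var (Inr j) P))"

definition du_dx :: "nat \<Rightarrow> cpoly \<Rightarrow> cpoly" where
  "du_dx m P = (\<Sum>j<m. pderiv_var (Inr j) (pderiv_var (Inl j) P))"

definition x_du :: "nat \<Rightarrow> cpoly \<Rightarrow> cpoly" where
  "x_du m P = (\<Sum>j<m. mult_var (Inl j) (pderiv_var (Inr j) P))"

definition u_dx :: "nat \<Rightarrow> cpoly \<Rightarrow> cpoly" where
  "u_dx m P = (\<Sum>j<m. mult_var (Inr j) (pderiv_var (Inl j) P))"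

definition normsq_x :: "nat \<Rightarrow> cpoly \<Rightarrow> cpoly" where
  "normsq_x m P = (\<Sum>j<m. mult_var (Inl j) (mult_var (Inl j) P))"

definition normsq_u :: "nat \<Rightarrow> cpoly \<Rightarrow> cpoly" where
  "normsq_u m P = (\<Sum>j<m. mult_var (Inr j) (mult_var (Inr j) P))"

definition pi_s :: "nat \<Rightarrow> nat \<Rightarrow> nat \<Rightarrow> cpoly \<Rightarrow> cpoly" where
  "pi_s m p q P = (THE H. \<exists>Hs :: nat \<Rightarrow> nat \<Rightarrow> cpoly.
      (\<forall>a \<le> p div 2. \<forall>b \<le> q div 2. Hs a b \<in> Pspace m (p - 2*a) (q - 2*b)
          \<and> Delta_x m (Hs a b) = 0 \<and> Delta_u m (Hs a b) = 0)
      \<and> P = (\<Sum>a\<le>p div 2. \<Sum>b\<le>q div 2. (normsq_x m ^^ a) ((normsq_u m ^^ b) (Hs a b)))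
      \<and> H = Hs 0 0)"

definition S_u :: "nat \<Rightarrow> nat \<Rightarrow> nat \<Rightarrow> cpoly \<Rightarrow> cpoly" where
  "S_u m p q P = pi_s m (p - 1) (q + 1) (u_dx m P)"

fun S_u_pow :: "nat \<Rightarrow> nat \<Rightarrow> nat \<Rightarrow> nat \<Rightarrow> cpoly \<Rightarrow> cpoly" where
  "S_u_pow m 0 p q P = P"
| "S_u_pow m (Suc j) p q P = S_u m (p - j) (q + j) (S_u_pow m j p q P)"

definition Hspace :: "nat \<Rightarrow> nat \<Rightarrow> nat \<Rightarrow> cpoly set" where
  "Hspace m k l = {P \<in> Pspace m k l. Delta_x m P = 0 \<and> Delta_u m P = 0
      \<and> du_dx m P = 0 \<and> x_du m P = 0}"

end

theory Submission
  imports Defs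
begin

abbreviation lk :: "mono \<Rightarrow> nat + nat \<Rightarrow> nat" where "lk \<equiv> Poly_Mapping.lookup"
abbreviation e :: "nat + nat \<Rightarrow> mono" where "e v \<equiv> Poly_Mapping.single v 1"

lemma lk_add_s [simp]: "Poly_Mapping.lookup (\<alpha> + Poly_Mapping.single v n) w = Poly_Mapping.lookup \<alpha> w + (if v = w then n else 0)"
  by (simp add: lookup_add lookup_single when_def)

lemma lk_minus_s [simp]: "Poly_Mapping.lookup (\<alpha> - Poly_Mapping.single v n) w = Poly_Mapping.lookup \<alpha> w - (if v = w then n else (0::nat))"
  by (simp add: lookup_minus lookup_single when_def)

lemma add_minus_e [simp]: "\<alpha> + e v - e v = (\<alpha>::mono)"
  by (rule poly_mapping_eqI) simp

lemma minus_add_e: "0 < Poly_Mapping.lookup \<alpha> v \<Longrightarrow> \<alpha> - e v + e v = (\<alpha>::mono)"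
  by (rule poly_mapping_eqI) auto

lemma swap_e: "v \<noteq> w \<Longrightarrow> 0 < Poly_Mapping.lookup \<alpha> w \<Longrightarrow> \<alpha> + e v - e w = \<alpha> - e w + (e v::mono)"
  by (rule poly_mapping_eqI) auto

lemma comm_e: "\<alpha> + e v + e w = \<alpha> + e w + (e v::mono)"
  by (rule poly_mapping_eqI) auto

lemma mm_comm_e: "\<alpha> - e v - e w = \<alpha> - e w - (e v::mono)"
  by (rule poly_mapping_eqI) auto

lemma pd_pd_comm: "pderiv_var v (pderiv_var w P) = pderiv_var w (pderiv_var v P)"
  unfolding pderiv_var_def
proof (rule ext)
  fix \<alpha>
  show "of_nat (lk \<alpha> v + 1) * (of_nat (lk (\<alpha> + e v) w + 1) * P (\<alpha> + e v + e w)) =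
    of_nat (lk \<alpha> w + 1) * (of_nat (lk (\<alpha> + e w) v + 1) * P (\<alpha> + e w + e v))"
    unfolding comm_e[of \<alpha> v w] by (cases "v = w") (simp_all only: lk_add_s, auto simp: algebra_simps)
qed

lemma mv_mv_comm: "mult_var v (mult_var w P) = mult_var w (mult_var v P)"
  unfolding mult_var_def
proof (rule ext)
  fix \<alpha>
  show "(if 0 < lk \<alpha> v then if 0 < lk (\<alpha> - e v) w then P (\<alpha> - e v - e w) else 0 else 0) =
        (if 0 < lk \<alpha> w then if 0 < lk (\<alpha> - e w) v then P (\<alpha> - e w - e v) else 0 else 0)"
    unfolding mm_comm_e[of \<alpha> v w] by (cases "v = w") (simp_all only: lk_minus_s, auto)
qed

lemma pd_mv_comm: "pderiv_var v (mult_var w P) = mult_var w (pderiv_var v P) + (if v = w then P else 0)"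
  unfolding pderiv_var_def mult_var_def
proof (rule ext)
  fix \<alpha>
  show "of_nat (lk \<alpha> v + 1) * (if 0 < lk (\<alpha> + e v) w then P (\<alpha> + e v - e w) else 0) =
        ((\<lambda>\<alpha>. if 0 < lk \<alpha> w then of_nat (lk (\<alpha> - e w) v + 1) * P (\<alpha> - e w + e v) else 0) +
        (if v = w then P else 0)) \<alpha>"
  proof (cases "v = w")
    case True
    show ?thesis
    proof (cases "lk \<alpha> w")
      case 0 then show ?thesis using True by (simp only: lk_add_s add_minus_e) simp
    next
      case (Suc n)
      then have "\<alpha> - e w + e w = \<alpha>" by (intro minus_add_e) simp
      then show ?thesis using True Suc by (simp only: lk_add_s add_minus_e lk_minus_s) (simp add: algebra_simps)
    qed
  next
    case False
    have h1: "lk (\<alpha> + e v) w = lk \<alpha> w" "lk (\<alpha> - e w) v = lk \<alpha> v" using False by simp_all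
    show ?thesis
    proof (cases "0 < lk \<alpha> w")
      case True
      have "\<alpha> + e v - e w = \<alpha> - e w + e v" using swap_e[OF False True] .
      then show ?thesis unfolding h1 using True False by simp
    qed (use False h1 in simp)
  qed
qed


lemma sum_fun_apply: "(\<Sum>j\<in>A. f j) (\<alpha>::'b) = (\<Sum>j\<in>A. (f j \<alpha>::'c::comm_monoid_add))"
  by (induction A rule: infinite_finite_induct) auto

definition smul :: "complex \<Rightarrow> cpoly \<Rightarrow> cpoly" where "smul c P = (\<lambda>\<alpha>. c * P \<alpha>)"

definition lin :: "(cpoly \<Rightarrow> cpoly) \<Rightarrow> bool" where
  "lin D \<longleftrightarrow> (\<forall>P Q. D (P + Q) = D P + D Q) \<and> (\<forall>c P. D (smul c P) = smul c (D P))"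

lemma lin_add: "lin D \<Longrightarrow> D (P + Q) = D P + D Q" by (simp add: lin_def)
lemma lin_smul: "lin D \<Longrightarrow> D (smul c P) = smul c (D P)" by (simp add: lin_def)
lemma smul_0: "smul 0 P = 0" by (simp add: smul_def fun_eq_iff)
lemma smul_m1: "smul (-1) P = - P" by (simp add: smul_def fun_eq_iff)
lemma lin_zero: "lin D \<Longrightarrow> D 0 = 0"
  using lin_smul[of D 0 0] by (simp add: smul_0)
lemma lin_uminus: "lin D \<Longrightarrow> D (- P) = - D P"
  using lin_smul[of D "-1" P] by (simp add: smul_m1)
lemma lin_diff: "lin D \<Longrightarrow> D (P - Q) = D P - D Q"
  using lin_add[of D P "-Q"] lin_uminus[of D Q] by simp
lemma lin_sum: "lin D \<Longrightarrow> D (\<Sum>j\<in>A. f j) = (\<Sum>j\<in>A. D (f j))"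
  by (induction A rule: infinite_finite_induct) (auto simp: lin_zero lin_add)

lemma lin_pd: "lin (pderiv_var v)"
  unfolding lin_def pderiv_var_def smul_def by (auto simp: fun_eq_iff algebra_simps)
lemma lin_mv: "lin (mult_var v)"
  unfolding lin_def mult_var_def smul_def by (auto simp: fun_eq_iff algebra_simps)
lemma lin_comp: "lin D \<Longrightarrow> lin E \<Longrightarrow> lin (\<lambda>P. D (E P))"
  unfolding lin_def by auto
lemma lin_sumop: "(\<And>j. j \<in> A \<Longrightarrow> lin (D j)) \<Longrightarrow> lin (\<lambda>P. \<Sum>j\<in>A. D j P)"
  unfolding lin_def smul_def
  by (auto simp: fun_eq_iff sum_fun_apply sum.distrib sum_distrib_left)
lemma lin_funpow: "lin D \<Longrightarrow> lin (D ^^ n)"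
  by (induction n) (auto simp: lin_def)

lemma lin_Dx: "lin (Delta_x m)" unfolding Delta_x_def[abs_def]
  by (rule lin_sumop, rule lin_comp[OF lin_pd lin_pd])
lemma lin_Du: "lin (Delta_u m)" unfolding Delta_u_def[abs_def]
  by (rule lin_sumop, rule lin_comp[OF lin_pd lin_pd])
lemma lin_dudx: "lin (du_dx m)" unfolding du_dx_def[abs_def]
  by (rule lin_sumop, rule lin_comp[OF lin_pd lin_pd])
lemma lin_xdu: "lin (x_du m)" unfolding x_du_def[abs_def]
  by (rule lin_sumop, rule lin_comp[OF lin_mv lin_pd])
lemma lin_udx: "lin (u_dx m)" unfolding u_dx_def[abs_def]
  by (rule lin_sumop, rule lin_comp[OF lin_mv lin_pd])
lemma lin_nx: "lin (normsq_x m)" unfolding normsq_x_def[abs_def]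
  by (rule lin_sumop, rule lin_comp[OF lin_mv lin_mv])
lemma lin_nu: "lin (normsq_u m)" unfolding normsq_u_def[abs_def]
  by (rule lin_sumop, rule lin_comp[OF lin_mv lin_mv])

lemmas pd_sum = lin_sum[OF lin_pd]
lemmas mv_sum = lin_sum[OF lin_mv]
lemmas pd_add = lin_add[OF lin_pd]
lemmas mv_add = lin_add[OF lin_mv]

lemma pd_mv_ne: "v \<noteq> w \<Longrightarrow> pderiv_var v (mult_var w P) = mult_var w (pderiv_var v P)"
  using pd_mv_comm by simp
lemma pd_mv_eq: "pderiv_var v (mult_var v P) = mult_var v (pderiv_var v P) + P"
  using pd_mv_comm by simp

lemma pd_mv_if: "pderiv_var v (mult_var w P) = mult_var w (pderiv_var v P) + (if v = w then P else 0)"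
  by (rule pd_mv_comm)

lemma pd3: "pderiv_var a (pderiv_var a (pderiv_var b P)) = pderiv_var b (pderiv_var a (pderiv_var a P))"
  by (metis pd_pd_comm)

lemma C1: "Delta_x m (u_dx m P) = u_dx m (Delta_x m P)"
proof -
  have "Delta_x m (u_dx m P) = (\<Sum>i<m. \<Sum>j<m. pderiv_var (Inl i) (pderiv_var (Inl i) (mult_var (Inr j) (pderiv_var (Inl j) P))))"
    unfolding Delta_x_def u_dx_def by (simp only: pd_sum)
  also have "\<dots> = (\<Sum>i<m. \<Sum>j<m. mult_var (Inr j) (pderiv_var (Inl j) (pderiv_var (Inl i) (pderiv_var (Inl i) P))))"
    by (intro sum.cong refl, simp only: pd_mv_ne sum.distinct simp_thms, rule arg_cong[of _ _ "mult_var _"], rule pd3)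
  also have "\<dots> = (\<Sum>j<m. \<Sum>i<m. mult_var (Inr j) (pderiv_var (Inl j) (pderiv_var (Inl i) (pderiv_var (Inl i) P))))"
    by (rule sum.swap)
  also have "\<dots> = u_dx m (Delta_x m P)"
    unfolding Delta_x_def u_dx_def by (simp only: pd_sum mv_sum)
  finally show ?thesis .
qed

lemma pd2_mv: "pderiv_var v (pderiv_var v (mult_var w Q)) = mult_var w (pderiv_var v (pderiv_var v Q)) + (if v = w then pderiv_var v Q + pderiv_var v Q else 0)"
proof (cases "v = w")
  case True
  then show ?thesis by (simp add: pd_mv_eq pd_add add.assoc)
next
  case False
  then show ?thesis by (simp add: pd_mv_ne)
qed

lemma sum_if_delta: "i < (m::nat) \<Longrightarrow> (\<Sum>j<m. f j + (if i = j then g j else 0)) = (\<Sum>j<m. f j) + (g i :: 'a::comm_monoid_add)"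
proof -
  assume i: "i < m"
  have "(\<Sum>j<m. if i = j then g j else 0) = g i" using sum.delta'[of "{..<m}" i g] i by simp
  then show ?thesis by (simp add: sum.distrib)
qed

lemma C2: "Delta_u m (u_dx m P) = u_dx m (Delta_u m P) + du_dx m P + du_dx m P"
proof -
  have X: "(\<Sum>i<m. \<Sum>j<m. mult_var (Inr j) (pderiv_var (Inr i) (pderiv_var (Inr i) (pderiv_var (Inl j) P)))) = u_dx m (Delta_u m P)"
  proof -
    have "(\<Sum>i<m. \<Sum>j<m. mult_var (Inr j) (pderiv_var (Inr i) (pderiv_var (Inr i) (pderiv_var (Inl j) P))))
       = (\<Sum>i<m. \<Sum>j<m. mult_var (Inr j) (pderiv_var (Inl j) (pderiv_var (Inr i) (pderiv_var (Inr i) P))))"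
      by (intro sum.cong refl, rule arg_cong[of _ _ "mult_var _"], rule pd3)
    also have "\<dots> = (\<Sum>j<m. \<Sum>i<m. mult_var (Inr j) (pderiv_var (Inl j) (pderiv_var (Inr i) (pderiv_var (Inr i) P))))"
      by (rule sum.swap)
    also have "\<dots> = u_dx m (Delta_u m P)"
      unfolding Delta_u_def u_dx_def by (simp only: pd_sum mv_sum)
    finally show ?thesis .
  qed
  have "Delta_u m (u_dx m P) = (\<Sum>i<m. \<Sum>j<m. pderiv_var (Inr i) (pderiv_var (Inr i) (mult_var (Inr j) (pderiv_var (Inl j) P))))"
    unfolding Delta_u_def u_dx_def by (simp only: pd_sum)
  also have "\<dots> = (\<Sum>i<m. \<Sum>j<m. mult_var (Inr j) (pderiv_var (Inr i) (pderiv_var (Inr i) (pderiv_var (Inl j) P)))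
      + (if i = j then pderiv_var (Inr i) (pderiv_var (Inl j) P) + pderiv_var (Inr i) (pderiv_var (Inl j) P) else 0))"
    by (simp only: pd2_mv sum.inject)
  also have "\<dots> = (\<Sum>i<m. (\<Sum>j<m. mult_var (Inr j) (pderiv_var (Inr i) (pderiv_var (Inr i) (pderiv_var (Inl j) P))))
      + (pderiv_var (Inr i) (pderiv_var (Inl i) P) + pderiv_var (Inr i) (pderiv_var (Inl i) P)))"
    by (rule sum.cong[OF refl], rule sum_if_delta) simp
  also have "\<dots> = (\<Sum>i<m. \<Sum>j<m. mult_var (Inr j) (pderiv_var (Inr i) (pderiv_var (Inr i) (pderiv_var (Inl j) P))))
     + ((\<Sum>i<m. pderiv_var (Inr i) (pderiv_var (Inl i) P)) + (\<Sum>i<m. pderiv_var (Inr i) (pderiv_var (Inl i) P)))"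
    by (simp only: sum.distrib)
  also have "\<dots> = u_dx m (Delta_u m P) + du_dx m P + du_dx m P"
    unfolding X du_dx_def by (simp only: add.assoc)
  finally show ?thesis .
qed

lemma pdmix: "b \<noteq> w \<Longrightarrow> pderiv_var a (pderiv_var b (mult_var w Q)) = mult_var w (pderiv_var a (pderiv_var b Q)) + (if a = w then pderiv_var b Q else 0)"
  by (simp add: pd_mv_ne pd_mv_if)

lemma pd3': "pderiv_var a (pderiv_var b (pderiv_var c P)) = pderiv_var c (pderiv_var a (pderiv_var b P))"
  by (metis pd_pd_comm)

lemma C3: "du_dx m (u_dx m P) = u_dx m (du_dx m P) + Delta_x m P"
proof -
  have X: "(\<Sum>i<m. \<Sum>j<m. mult_var (Inr j) (pderiv_var (Inr i) (pderiv_var (Inl i) (pderiv_var (Inl j) P)))) = u_dx m (du_dx m P)"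
  proof -
    have "(\<Sum>i<m. \<Sum>j<m. mult_var (Inr j) (pderiv_var (Inr i) (pderiv_var (Inl i) (pderiv_var (Inl j) P))))
       = (\<Sum>i<m. \<Sum>j<m. mult_var (Inr j) (pderiv_var (Inl j) (pderiv_var (Inr i) (pderiv_var (Inl i) P))))"
      by (intro sum.cong refl, rule arg_cong[of _ _ "mult_var _"], rule pd3')
    also have "\<dots> = (\<Sum>j<m. \<Sum>i<m. mult_var (Inr j) (pderiv_var (Inl j) (pderiv_var (Inr i) (pderiv_var (Inl i) P))))"
      by (rule sum.swap)
    also have "\<dots> = u_dx m (du_dx m P)"
      unfolding du_dx_def u_dx_def by (simp only: pd_sum mv_sum)
    finally show ?thesis .
  qed
  have "du_dx m (u_dx m P) = (\<Sum>i<m. \<Sum>j<m. pderiv_var (Inr i) (pderiv_var (Inl i) (mult_var (Inr j) (pderiv_var (Inl j) P))))"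
    unfolding du_dx_def u_dx_def by (simp only: pd_sum)
  also have "\<dots> = (\<Sum>i<m. \<Sum>j<m. mult_var (Inr j) (pderiv_var (Inr i) (pderiv_var (Inl i) (pderiv_var (Inl j) P)))
      + (if i = j then pderiv_var (Inl i) (pderiv_var (Inl j) P) else 0))"
    by (simp only: pdmix sum.inject sum.distinct simp_thms)
  also have "\<dots> = (\<Sum>i<m. (\<Sum>j<m. mult_var (Inr j) (pderiv_var (Inr i) (pderiv_var (Inl i) (pderiv_var (Inl j) P))))
      + pderiv_var (Inl i) (pderiv_var (Inl i) P))"
    by (rule sum.cong[OF refl], rule sum_if_delta) simp
  also have "\<dots> = (\<Sum>i<m. \<Sum>j<m. mult_var (Inr j) (pderiv_var (Inr i) (pderiv_var (Inl i) (pderiv_var (Inl j) P))))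
     + (\<Sum>i<m. pderiv_var (Inl i) (pderiv_var (Inl i) P))"
    by (simp only: sum.distrib)
  also have "\<dots> = u_dx m (du_dx m P) + Delta_x m P"
    unfolding X Delta_x_def by (rule refl)
  finally show ?thesis .
qed

definition Ex :: "nat \<Rightarrow> cpoly \<Rightarrow> cpoly" where "Ex m P = (\<Sum>i<m. mult_var (Inl i) (pderiv_var (Inl i) P))"
definition Eu :: "nat \<Rightarrow> cpoly \<Rightarrow> cpoly" where "Eu m P = (\<Sum>i<m. mult_var (Inr i) (pderiv_var (Inr i) P))"

lemma mv_pd_mix: "pderiv_var a (mult_var w Q) = mult_var w (pderiv_var a Q) + (if a = w then Q else 0)"
  by (rule pd_mv_if)

lemma C4: "x_du m (u_dx m P) + Eu m P = u_dx m (x_du m P) + Ex m P"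
proof -
  have A: "x_du m (u_dx m P) = (\<Sum>i<m. \<Sum>j<m. mult_var (Inl i) (mult_var (Inr j) (pderiv_var (Inr i) (pderiv_var (Inl j) P))))
     + Ex m P" (is "_ = ?R")
  proof -
    have "x_du m (u_dx m P) = (\<Sum>i<m. \<Sum>j<m. mult_var (Inl i) (pderiv_var (Inr i) (mult_var (Inr j) (pderiv_var (Inl j) P))))"
      unfolding x_du_def u_dx_def by (simp only: pd_sum mv_sum)
    also have "\<dots> = (\<Sum>i<m. \<Sum>j<m. mult_var (Inl i) (mult_var (Inr j) (pderiv_var (Inr i) (pderiv_var (Inl j) P)))
         + (if i = j then mult_var (Inl i) (pderiv_var (Inl j) P) else 0))"
      by (intro sum.cong refl) (simp add: pd_mv_if mv_add lin_zero[OF lin_mv])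
    also have "\<dots> = (\<Sum>i<m. (\<Sum>j<m. mult_var (Inl i) (mult_var (Inr j) (pderiv_var (Inr i) (pderiv_var (Inl j) P))))
         + mult_var (Inl i) (pderiv_var (Inl i) P))"
      by (rule sum.cong[OF refl], rule sum_if_delta) simp
    also have "\<dots> = ?R"
      unfolding Ex_def by (simp only: sum.distrib)
    finally show ?thesis .
  qed
  have B: "u_dx m (x_du m P) = (\<Sum>j<m. \<Sum>i<m. mult_var (Inr j) (mult_var (Inl i) (pderiv_var (Inl j) (pderiv_var (Inr i) P))))
     + Eu m P" (is "_ = ?R")
  proof -
    have "u_dx m (x_du m P) = (\<Sum>j<m. \<Sum>i<m. mult_var (Inr j) (pderiv_var (Inl j) (mult_var (Inl i) (pderiv_var (Inr i) P))))"
      unfolding x_du_def u_dx_def by (simp only: pd_sum mv_sum)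
    also have "\<dots> = (\<Sum>j<m. \<Sum>i<m. mult_var (Inr j) (mult_var (Inl i) (pderiv_var (Inl j) (pderiv_var (Inr i) P)))
         + (if j = i then mult_var (Inr j) (pderiv_var (Inr i) P) else 0))"
      by (intro sum.cong refl) (simp add: pd_mv_if mv_add lin_zero[OF lin_mv])
    also have "\<dots> = (\<Sum>j<m. (\<Sum>i<m. mult_var (Inr j) (mult_var (Inl i) (pderiv_var (Inl j) (pderiv_var (Inr i) P))))
         + mult_var (Inr j) (pderiv_var (Inr j) P))"
      by (rule sum.cong[OF refl], rule sum_if_delta) simp
    also have "\<dots> = ?R"
      unfolding Eu_def by (simp only: sum.distrib)
    finally show ?thesis .
  qed
  have C: "(\<Sum>i<m. \<Sum>j<m. mult_var (Inl i) (mult_var (Inr j) (pderiv_var (Inr i) (pderiv_var (Inl j) P))))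
     = (\<Sum>j<m. \<Sum>i<m. mult_var (Inr j) (mult_var (Inl i) (pderiv_var (Inl j) (pderiv_var (Inr i) P))))"
    by (subst sum.swap, intro sum.cong refl, metis mv_mv_comm pd_pd_comm)
  show ?thesis unfolding A B C by (simp add: add_ac)
qed

abbreviation V :: "nat \<Rightarrow> (nat + nat) set" where "V m \<equiv> Inl ` {..<m} \<union> Inr ` {..<m}"

lemma mvpd_apply: "mult_var v (pderiv_var v P) \<alpha> = of_nat (lk \<alpha> v) * P \<alpha>"
proof (cases "lk \<alpha> v")
  case 0 then show ?thesis by (simp add: mult_var_def)
next
  case (Suc n)
  then have "\<alpha> - e v + e v = \<alpha>" by (intro minus_add_e) simp
  then show ?thesis using Suc by (simp add: mult_var_def pderiv_var_def)
qed

lemma Euler_x: "P \<in> Pspace m p q \<Longrightarrow> Ex m P = smul (of_nat p) P"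
proof (rule ext)
  fix \<alpha> assume P: "P \<in> Pspace m p q"
  have "Ex m P \<alpha> = of_nat (xdeg m \<alpha>) * P \<alpha>"
    unfolding Ex_def xdeg_def by (simp add: sum_fun_apply mvpd_apply sum_distrib_right)
  also have "\<dots> = of_nat p * P \<alpha>" using P by (cases "P \<alpha> = 0") (auto simp: Pspace_def)
  finally show "Ex m P \<alpha> = smul (of_nat p) P \<alpha>" by (simp add: smul_def)
qed

lemma Euler_u: "P \<in> Pspace m p q \<Longrightarrow> Eu m P = smul (of_nat q) P"
proof (rule ext)
  fix \<alpha> assume P: "P \<in> Pspace m p q"
  have "Eu m P \<alpha> = of_nat (udeg m \<alpha>) * P \<alpha>"
    unfolding Eu_def udeg_def by (simp add: sum_fun_apply mvpd_apply sum_distrib_right)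
  also have "\<dots> = of_nat q * P \<alpha>" using P by (cases "P \<alpha> = 0") (auto simp: Pspace_def)
  finally show "Eu m P \<alpha> = smul (of_nat q) P \<alpha>" by (simp add: smul_def)
qed

lemma udx_nz:
  assumes "u_dx m P \<alpha> \<noteq> 0"
  obtains j where "j < m" "0 < lk \<alpha> (Inr j)" "P (\<alpha> - e (Inr j) + e (Inl j)) \<noteq> 0"
proof -
  have "(\<Sum>j<m. mult_var (Inr j) (pderiv_var (Inl j) P) \<alpha>) \<noteq> 0"
    using assms unfolding u_dx_def by (simp add: sum_fun_apply)
  then obtain j where j: "j < m" "mult_var (Inr j) (pderiv_var (Inl j) P) \<alpha> \<noteq> 0"
    by (meson lessThan_iff sum.not_neutral_contains_not_neutral)
  then show ?thesis using that by (auto simp: mult_var_def pderiv_var_def split: if_splits)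
qed

lemma Pspace_nz: "P \<in> Pspace m p q \<Longrightarrow> P \<alpha> \<noteq> 0 \<Longrightarrow> Poly_Mapping.keys \<alpha> \<subseteq> V m \<and> xdeg m \<alpha> = p \<and> udeg m \<alpha> = q"
  unfolding Pspace_def by blast

lemma sum_delta_nat: "j < (m::nat) \<Longrightarrow> (\<Sum>i<m. f i + (if i = j then 1 else 0)) = (\<Sum>i<m. f i) + (1::nat)"
  by (simp add: sum.distrib)

lemma udx_Pspace:
  assumes P: "P \<in> Pspace m p q"
  shows "u_dx m P \<in> Pspace m (p - 1) (q + 1)"
proof -
  have fin: "finite {\<alpha>. P \<alpha> \<noteq> 0}" using P by (simp add: Pspace_def)
  have sub: "{\<alpha>. u_dx m P \<alpha> \<noteq> 0} \<subseteq> (\<Union>j<m. (\<lambda>\<beta>. \<beta> - e (Inl j) + e (Inr j)) ` {\<beta>. P \<beta> \<noteq> 0})"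
  proof
    fix \<alpha> assume "\<alpha> \<in> {\<alpha>. u_dx m P \<alpha> \<noteq> 0}"
    then obtain j where j: "j < m" "0 < lk \<alpha> (Inr j)" "P (\<alpha> - e (Inr j) + e (Inl j)) \<noteq> 0"
      using udx_nz by blast
    have "\<alpha> = (\<alpha> - e (Inr j) + e (Inl j)) - e (Inl j) + e (Inr j)"
      using j(2) by (intro poly_mapping_eqI) auto
    then show "\<alpha> \<in> (\<Union>j<m. (\<lambda>\<beta>. \<beta> - e (Inl j) + e (Inr j)) ` {\<beta>. P \<beta> \<noteq> 0})"
      using j by blast
  qed
  have fin2: "finite {\<alpha>. u_dx m P \<alpha> \<noteq> 0}"
    by (rule finite_subset[OF sub]) (use fin in auto)
  have "Poly_Mapping.keys \<alpha> \<subseteq> V m \<and> xdeg m \<alpha> = p - 1 \<and> udeg m \<alpha> = q + 1" if nz: "u_dx m P \<alpha> \<noteq> 0" for \<alpha>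
  proof -
    obtain j where j: "j < m" "0 < lk \<alpha> (Inr j)" "P (\<alpha> - e (Inr j) + e (Inl j)) \<noteq> 0"
      using udx_nz[OF nz] by blast
    define \<beta> where "\<beta> = \<alpha> - e (Inr j) + e (Inl j)"
    have Pb: "Poly_Mapping.keys \<beta> \<subseteq> V m" "xdeg m \<beta> = p" "udeg m \<beta> = q"
      using Pspace_nz[OF P, of \<beta>] j(3) unfolding \<beta>_def by auto
    have lx: "lk \<beta> (Inl i) = lk \<alpha> (Inl i) + (if i = j then 1 else 0)" for i
      unfolding \<beta>_def by simp
    have lu: "lk \<alpha> (Inr i) = lk \<beta> (Inr i) + (if i = j then 1 else 0)" for i
      unfolding \<beta>_def using j(2) by auto
    have "xdeg m \<beta> = xdeg m \<alpha> + 1"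
      unfolding xdeg_def lx using j(1) by (rule sum_delta_nat)
    moreover have "udeg m \<alpha> = udeg m \<beta> + 1"
      unfolding udeg_def lu using j(1) by (rule sum_delta_nat)
    moreover have "Poly_Mapping.keys \<alpha> \<subseteq> V m"
    proof
      fix v assume v: "v \<in> Poly_Mapping.keys \<alpha>"
      show "v \<in> V m"
      proof (cases "v = Inr j")
        case True then show ?thesis using j(1) by auto
      next
        case False
        then have "lk \<beta> v = lk \<alpha> v + (if v = Inl j then 1 else 0)" unfolding \<beta>_def by auto
        then have "v \<in> Poly_Mapping.keys \<beta>" using v by (simp add: in_keys_iff)
        then show ?thesis using Pb(1) by blast
      qed
    qed
    ultimately show ?thesis using Pb by simp
  qed
  then show ?thesis using fin2 unfolding Pspace_def by (simp only: mem_Collect_eq) blast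
qed

lemma udx_zero_deg: "P \<in> Pspace m 0 q \<Longrightarrow> u_dx m P = 0"
proof (rule ext, rule ccontr)
  fix \<alpha> assume P: "P \<in> Pspace m 0 q" and nz0: "u_dx m P \<alpha> \<noteq> (0::cpoly) \<alpha>"
  from nz0 have nz: "u_dx m P \<alpha> \<noteq> 0" by simp
  obtain j where j: "j < m" "0 < lk \<alpha> (Inr j)" "P (\<alpha> - e (Inr j) + e (Inl j)) \<noteq> 0"
    using udx_nz[OF nz] by blast
  define \<beta> where "\<beta> = \<alpha> - e (Inr j) + e (Inl j)"
  have "xdeg m \<beta> = 0" using Pspace_nz[OF P, of \<beta>] j(3) unfolding \<beta>_def by blast
  moreover have "lk \<beta> (Inl j) > 0" unfolding \<beta>_def by simp
  moreover have "lk \<beta> (Inl j) \<le> xdeg m \<beta>" unfolding xdeg_def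
    by (rule member_le_sum[where f="\<lambda>i. lk \<beta> (Inl i)"]) (use j(1) in auto)
  ultimately show False by linarith
qed

definition fs :: "cpoly \<Rightarrow> bool" where "fs P \<longleftrightarrow> finite {\<alpha>. P \<alpha> \<noteq> 0}"

lemma fs_zero: "fs 0" by (simp add: fs_def)
lemma fs_add: "fs P \<Longrightarrow> fs Q \<Longrightarrow> fs (P + Q)"
  unfolding fs_def by (rule finite_subset[of _ "{\<alpha>. P \<alpha> \<noteq> 0} \<union> {\<alpha>. Q \<alpha> \<noteq> 0}"]) auto
lemma fs_sum: "(\<And>j. j \<in> A \<Longrightarrow> fs (f j)) \<Longrightarrow> fs (\<Sum>j\<in>A. f j)"
  by (induction A rule: infinite_finite_induct) (auto intro: fs_add fs_zero)
lemma fs_mv: "fs P \<Longrightarrow> fs (mult_var v P)"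
  unfolding fs_def
proof -
  assume f: "finite {\<alpha>. P \<alpha> \<noteq> 0}"
  have "{\<alpha>. mult_var v P \<alpha> \<noteq> 0} \<subseteq> (\<lambda>\<beta>. \<beta> + e v) ` {\<alpha>. P \<alpha> \<noteq> 0}"
  proof
    fix \<alpha> assume "\<alpha> \<in> {\<alpha>. mult_var v P \<alpha> \<noteq> 0}"
    then have a: "0 < lk \<alpha> v" "P (\<alpha> - e v) \<noteq> 0" by (auto simp: mult_var_def split: if_splits)
    have "\<alpha> = (\<alpha> - e v) + e v" using minus_add_e[OF a(1)] by (rule sym)
    then show "\<alpha> \<in> (\<lambda>\<beta>. \<beta> + e v) ` {\<alpha>. P \<alpha> \<noteq> 0}" using a by blast
  qed
  then show "finite {\<alpha>. mult_var v P \<alpha> \<noteq> 0}" using f finite_subset by blast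
qed
lemma fs_pd: "fs P \<Longrightarrow> fs (pderiv_var v P)"
  unfolding fs_def
proof -
  assume f: "finite {\<alpha>. P \<alpha> \<noteq> 0}"
  have "{\<alpha>. pderiv_var v P \<alpha> \<noteq> 0} \<subseteq> (\<lambda>\<beta>. \<beta> - e v) ` {\<alpha>. P \<alpha> \<noteq> 0}"
  proof
    fix \<alpha> assume "\<alpha> \<in> {\<alpha>. pderiv_var v P \<alpha> \<noteq> 0}"
    then have a: "P (\<alpha> + e v) \<noteq> 0" by (auto simp: pderiv_var_def)
    have "\<alpha> = (\<alpha> + e v) - e v" by simp
    then show "\<alpha> \<in> (\<lambda>\<beta>. \<beta> - e v) ` {\<alpha>. P \<alpha> \<noteq> 0}" using a by blast
  qed
  then show "finite {\<alpha>. pderiv_var v P \<alpha> \<noteq> 0}" using f finite_subset by blast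
qed
lemma fs_nx: "fs P \<Longrightarrow> fs (normsq_x m P)"
  unfolding normsq_x_def by (intro fs_sum fs_mv)
lemma fs_nu: "fs P \<Longrightarrow> fs (normsq_u m P)"
  unfolding normsq_u_def by (intro fs_sum fs_mv)
lemma fs_nx_pow: "fs P \<Longrightarrow> fs ((normsq_x m ^^ a) P)"
  by (induction a) (auto intro: fs_nx)
lemma fs_nu_pow: "fs P \<Longrightarrow> fs ((normsq_u m ^^ a) P)"
  by (induction a) (auto intro: fs_nu)
lemma fs_Pspace: "P \<in> Pspace m p q \<Longrightarrow> fs P"
  unfolding Pspace_def fs_def by blast

definition wt :: "mono \<Rightarrow> nat" where "wt \<alpha> = (\<Prod>v\<in>Poly_Mapping.keys \<alpha>. fact (lk \<alpha> v))"

lemma wt_superset: "finite S \<Longrightarrow> Poly_Mapping.keys \<alpha> \<subseteq> S \<Longrightarrow> wt \<alpha> = (\<Prod>v\<in>S. fact (lk \<alpha> v))"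
  unfolding wt_def by (rule prod.mono_neutral_left) (auto simp: in_keys_iff)

lemma wt_add_e: "wt (\<beta> + e v) = wt \<beta> * (lk \<beta> v + 1)"
proof -
  define S where "S = insert v (Poly_Mapping.keys \<beta>)"
  have fS: "finite S" unfolding S_def by simp
  have k1: "Poly_Mapping.keys (\<beta> + e v) \<subseteq> S" unfolding S_def using keys_add[of \<beta> "e v"] by auto
  have k2: "Poly_Mapping.keys \<beta> \<subseteq> S" unfolding S_def by auto
  have vS: "v \<in> S" unfolding S_def by simp
  have h: "(\<Prod>u\<in>S - {v}. fact (lk (\<beta> + e v) u)) = (\<Prod>u\<in>S - {v}. fact (lk \<beta> u))"
    by (rule prod.cong) auto
  have h2: "lk (\<beta> + e v) v = lk \<beta> v + 1" by simp
  have "wt (\<beta> + e v) = (\<Prod>u\<in>S. fact (lk (\<beta> + e v) u))" by (rule wt_superset[OF fS k1])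
  also have "\<dots> = fact (lk (\<beta> + e v) v) * (\<Prod>u\<in>S - {v}. fact (lk (\<beta> + e v) u))" by (rule prod.remove[OF fS vS])
  also have "\<dots> = fact (lk \<beta> v + 1) * (\<Prod>u\<in>S - {v}. fact (lk \<beta> u))" unfolding h h2 by (rule refl)
  also have "\<dots> = (lk \<beta> v + 1) * (fact (lk \<beta> v) * (\<Prod>u\<in>S - {v}. fact (lk \<beta> u)))"
    by (simp add: algebra_simps)
  also have "fact (lk \<beta> v) * (\<Prod>u\<in>S - {v}. fact (lk \<beta> u)) = wt \<beta>"
    by (simp only: wt_superset[OF fS k2] prod.remove[OF fS vS])
  finally show ?thesis by simp
qed

definition fp :: "cpoly \<Rightarrow> cpoly \<Rightarrow> complex" where
  "fp X Y = Sum_any (\<lambda>\<alpha>. of_nat (wt \<alpha>) * X \<alpha> * cnj (Y \<alpha>))"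

lemma fp_supp: "{\<alpha>. of_nat (wt \<alpha>) * X \<alpha> * cnj (Y \<alpha>) \<noteq> 0} \<subseteq> {\<alpha>. X \<alpha> \<noteq> 0}" by auto

lemma fp_expand: "fs X \<Longrightarrow> finite A \<Longrightarrow> {\<alpha>. X \<alpha> \<noteq> 0} \<subseteq> A \<Longrightarrow> fp X Y = (\<Sum>\<alpha>\<in>A. of_nat (wt \<alpha>) * X \<alpha> * cnj (Y \<alpha>))"
  unfolding fp_def by (rule Sum_any.expand_superset) auto

lemma fp_add1: "fs X \<Longrightarrow> fs X' \<Longrightarrow> fp (X + X') Y = fp X Y + fp X' Y"
proof -
  assume f: "fs X" "fs X'"
  define A where "A = {\<alpha>. X \<alpha> \<noteq> 0} \<union> {\<alpha>. X' \<alpha> \<noteq> 0}"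
  have fA: "finite A" using f unfolding A_def fs_def by simp
  have "fp (X + X') Y = (\<Sum>\<alpha>\<in>A. of_nat (wt \<alpha>) * (X + X') \<alpha> * cnj (Y \<alpha>))"
    by (rule fp_expand[OF fs_add[OF f] fA]) (auto simp: A_def)
  also have "\<dots> = (\<Sum>\<alpha>\<in>A. of_nat (wt \<alpha>) * X \<alpha> * cnj (Y \<alpha>)) + (\<Sum>\<alpha>\<in>A. of_nat (wt \<alpha>) * X' \<alpha> * cnj (Y \<alpha>))"
    by (simp add: algebra_simps sum.distrib)
  also have "\<dots> = fp X Y + fp X' Y"
    using fp_expand[OF f(1) fA, of Y] fp_expand[OF f(2) fA, of Y] by (simp add: A_def)
  finally show ?thesis .
qed

lemma fp_zero1: "fp 0 Y = 0" by (simp add: fp_def)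
lemma fp_zero2: "fp X 0 = 0" by (simp add: fp_def)

lemma fp_sum1: "(\<And>j. j \<in> I \<Longrightarrow> fs (f j)) \<Longrightarrow> fp (\<Sum>j\<in>I. f j) Y = (\<Sum>j\<in>I. fp (f j) Y)"
proof (induction I rule: infinite_finite_induct)
  case (insert x F)
  have f1: "fs (f x)" "fs (sum f F)" using insert.prems by (auto intro: fs_sum)
  have "fp (sum f (insert x F)) Y = fp (f x + sum f F) Y" unfolding sum.insert[OF insert(1,2)] by (rule refl)
  also have "\<dots> = fp (f x) Y + fp (sum f F) Y" by (rule fp_add1[OF f1])
  also have "\<dots> = fp (f x) Y + (\<Sum>j\<in>F. fp (f j) Y)" using insert by simp
  also have "\<dots> = (\<Sum>j\<in>insert x F. fp (f j) Y)" unfolding sum.insert[OF insert(1,2)] by (rule refl)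
  finally show ?case .
qed (auto simp: fp_zero1)

lemma fp_diff1: "fs X \<Longrightarrow> fs X' \<Longrightarrow> fp (X - X') Y = fp X Y - fp X' Y"
proof -
  assume f: "fs X" "fs X'"
  have fm: "fs (X - X')" using f unfolding fs_def
    by (rule_tac finite_subset[of _ "{\<alpha>. X \<alpha> \<noteq> 0} \<union> {\<alpha>. X' \<alpha> \<noteq> 0}"]) auto
  have "fp X Y = fp ((X - X') + X') Y" by simp
  also have "\<dots> = fp (X - X') Y + fp X' Y" by (rule fp_add1[OF fm f(2)])
  finally show ?thesis by simp
qed

lemma fp_add2: "fs X \<Longrightarrow> fp X (Y + Y') = fp X Y + fp X Y'"
proof -
  assume f: "fs X"
  define A where "A = {\<alpha>. X \<alpha> \<noteq> 0}"
  have fA: "finite A" using f unfolding A_def fs_def by simp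
  show ?thesis
    using fp_expand[OF f fA, of "Y + Y'"] fp_expand[OF f fA, of Y] fp_expand[OF f fA, of Y']
    by (simp add: A_def algebra_simps sum.distrib)
qed

lemma fp_sum2: "fs X \<Longrightarrow> fp X (\<Sum>j\<in>I. f j) = (\<Sum>j\<in>I. fp X (f j))"
  by (induction I rule: infinite_finite_induct) (auto simp: fp_zero2 fp_add2)

lemma fp_adj: "fs X \<Longrightarrow> fp (mult_var v X) Y = fp X (pderiv_var v Y)"
proof -
  assume f: "fs X"
  define A where "A = {\<alpha>. X \<alpha> \<noteq> 0}"
  have fA: "finite A" using f unfolding A_def fs_def by simp
  have fB: "finite ((\<lambda>\<beta>. \<beta> + e v) ` A)" using fA by simp
  have supp: "{\<alpha>. mult_var v X \<alpha> \<noteq> 0} \<subseteq> (\<lambda>\<beta>. \<beta> + e v) ` A"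
  proof
    fix \<alpha> assume "\<alpha> \<in> {\<alpha>. mult_var v X \<alpha> \<noteq> 0}"
    then have a: "0 < lk \<alpha> v" "X (\<alpha> - e v) \<noteq> 0" by (auto simp: mult_var_def split: if_splits)
    have "\<alpha> = (\<alpha> - e v) + e v" using minus_add_e[OF a(1)] by (rule sym)
    then show "\<alpha> \<in> (\<lambda>\<beta>. \<beta> + e v) ` A" using a unfolding A_def by blast
  qed
  have inj: "inj_on (\<lambda>\<beta>. \<beta> + e v) A" by (rule inj_onI) simp
  have "fp (mult_var v X) Y = (\<Sum>\<alpha>\<in>(\<lambda>\<beta>. \<beta> + e v) ` A. of_nat (wt \<alpha>) * mult_var v X \<alpha> * cnj (Y \<alpha>))"
    by (rule fp_expand[OF fs_mv[OF f] fB supp])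
  also have "\<dots> = (\<Sum>\<beta>\<in>A. of_nat (wt (\<beta> + e v)) * mult_var v X (\<beta> + e v) * cnj (Y (\<beta> + e v)))"
    unfolding sum.reindex[OF inj] comp_def by (rule refl)
  also have "\<dots> = (\<Sum>\<beta>\<in>A. of_nat (wt \<beta>) * X \<beta> * cnj (pderiv_var v Y \<beta>))"
    by (rule sum.cong[OF refl]) (unfold wt_add_e, simp add: mult_var_def pderiv_var_def algebra_simps)
  also have "\<dots> = fp X (pderiv_var v Y)"
    by (rule fp_expand[OF f fA, symmetric]) (simp add: A_def)
  finally show ?thesis .
qed

lemma fp_nx: "fs X \<Longrightarrow> fp (normsq_x m X) Y = fp X (Delta_x m Y)"
proof -
  assume f: "fs X"
  have "fp (normsq_x m X) Y = (\<Sum>j<m. fp (mult_var (Inl j) (mult_var (Inl j) X)) Y)"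
    unfolding normsq_x_def by (rule fp_sum1) (intro fs_mv f)
  also have "\<dots> = (\<Sum>j<m. fp X (pderiv_var (Inl j) (pderiv_var (Inl j) Y)))"
    by (rule sum.cong[OF refl]) (simp add: fp_adj fs_mv f)
  also have "\<dots> = fp X (Delta_x m Y)"
    unfolding Delta_x_def by (rule fp_sum2[OF f, symmetric])
  finally show ?thesis .
qed

lemma fp_nu: "fs X \<Longrightarrow> fp (normsq_u m X) Y = fp X (Delta_u m Y)"
proof -
  assume f: "fs X"
  have "fp (normsq_u m X) Y = (\<Sum>j<m. fp (mult_var (Inr j) (mult_var (Inr j) X)) Y)"
    unfolding normsq_u_def by (rule fp_sum1) (intro fs_mv f)
  also have "\<dots> = (\<Sum>j<m. fp X (pderiv_var (Inr j) (pderiv_var (Inr j) Y)))"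
    by (rule sum.cong[OF refl]) (simp add: fp_adj fs_mv f)
  also have "\<dots> = fp X (Delta_u m Y)"
    unfolding Delta_u_def by (rule fp_sum2[OF f, symmetric])
  finally show ?thesis .
qed

lemma fp_pos: "fs R \<Longrightarrow> fp R R = 0 \<Longrightarrow> R = 0"
proof -
  assume f: "fs R" and z: "fp R R = 0"
  define A where "A = {\<alpha>. R \<alpha> \<noteq> 0}"
  have fA: "finite A" using f unfolding A_def fs_def by simp
  have t: "of_nat (wt \<alpha>) * R \<alpha> * cnj (R \<alpha>) = of_real (real (wt \<alpha>) * ((Re (R \<alpha>))^2 + (Im (R \<alpha>))^2))" for \<alpha>
    by (simp add: mult.assoc complex_mult_cnj)
  have "fp R R = (\<Sum>\<alpha>\<in>A. of_nat (wt \<alpha>) * R \<alpha> * cnj (R \<alpha>))"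
    by (rule fp_expand[OF f fA]) (simp add: A_def)
  also have "\<dots> = of_real (\<Sum>\<alpha>\<in>A. real (wt \<alpha>) * ((Re (R \<alpha>))^2 + (Im (R \<alpha>))^2))"
    unfolding t of_real_sum by (rule refl)
  finally have "of_real (\<Sum>\<alpha>\<in>A. real (wt \<alpha>) * ((Re (R \<alpha>))^2 + (Im (R \<alpha>))^2)) = (0::complex)" using z by metis
  then have "(\<Sum>\<alpha>\<in>A. real (wt \<alpha>) * ((Re (R \<alpha>))^2 + (Im (R \<alpha>))^2)) = 0" by (simp only: of_real_eq_0_iff)
  then have "\<forall>\<alpha>\<in>A. real (wt \<alpha>) * ((Re (R \<alpha>))^2 + (Im (R \<alpha>))^2) = 0"
    by (subst (asm) sum_nonneg_eq_0_iff[OF fA]) auto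
  moreover have "wt \<alpha> \<noteq> 0" for \<alpha> unfolding wt_def by (simp add: fact_nonzero)
  ultimately have "\<forall>\<alpha>\<in>A. Re (R \<alpha>) = 0 \<and> Im (R \<alpha>) = 0" by (auto simp: add_nonneg_eq_0_iff)
  then have "\<forall>\<alpha>\<in>A. R \<alpha> = 0" by (auto simp: complex_eq_iff)
  then show "R = 0" unfolding A_def by (auto simp: fun_eq_iff)
qed

lemma double_delta:
  assumes "\<And>a b. a \<le> A \<Longrightarrow> b \<le> B \<Longrightarrow> \<not> (a = 0 \<and> b = 0) \<Longrightarrow> f a b = 0"
  shows "(\<Sum>a\<le>(A::nat). \<Sum>b\<le>(B::nat). f a b) = (f 0 0 :: 'c::comm_monoid_add)"
proof -
  have inner: "(\<Sum>b\<le>B. f a b) = (if a = 0 then f 0 0 else 0)" if a: "a \<le> A" for a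
  proof -
    have "(\<Sum>b\<le>B. f a b) = (\<Sum>b\<le>B. if b = 0 then (if a = 0 then f 0 0 else 0) else 0)"
      by (rule sum.cong[OF refl]) (use assms a in auto)
    also have "\<dots> = (if a = 0 then f 0 0 else 0)" by (simp add: sum.delta)
    finally show ?thesis .
  qed
  have "(\<Sum>a\<le>A. \<Sum>b\<le>B. f a b) = (\<Sum>a\<le>A. if a = 0 then f 0 0 else 0)"
    by (rule sum.cong[OF refl]) (simp add: inner)
  also have "\<dots> = f 0 0" by (simp add: sum.delta)
  finally show ?thesis .
qed

lemma zero_Pspace: "0 \<in> Pspace m p q" by (simp add: Pspace_def)

lemma fpT:
  assumes "fs X" "Delta_x m R = 0" "Delta_u m R = 0" "\<not> (a = 0 \<and> b = 0)"
  shows "fp ((normsq_x m ^^ a) ((normsq_u m ^^ b) X)) R = 0"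
proof (cases a)
  case (Suc a')
  have "fp ((normsq_x m ^^ a) ((normsq_u m ^^ b) X)) R = fp (normsq_x m ((normsq_x m ^^ a') ((normsq_u m ^^ b) X))) R"
    using Suc by simp
  also have "\<dots> = fp ((normsq_x m ^^ a') ((normsq_u m ^^ b) X)) (Delta_x m R)"
    by (rule fp_nx) (intro fs_nx_pow fs_nu_pow assms(1))
  finally show ?thesis using assms(2) by (simp add: fp_zero2)
next
  case 0
  then obtain b' where b: "b = Suc b'" using assms(4) by (cases b) auto
  have "fp ((normsq_x m ^^ a) ((normsq_u m ^^ b) X)) R = fp (normsq_u m ((normsq_u m ^^ b') X)) R"
    using 0 b by simp
  also have "\<dots> = fp ((normsq_u m ^^ b') X) (Delta_u m R)"
    by (rule fp_nu) (intro fs_nu_pow assms(1))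
  finally show ?thesis using assms(3) by (simp add: fp_zero2)
qed

lemma pi_s_id:
  assumes HP: "H \<in> Pspace m p q" and Hx: "Delta_x m H = 0" and Hu: "Delta_u m H = 0"
  shows "pi_s m p q H = H"
  unfolding pi_s_def
proof (rule the_equality)
  define Hs0 :: "nat \<Rightarrow> nat \<Rightarrow> cpoly" where "Hs0 = (\<lambda>a b. if a = 0 \<and> b = 0 then H else 0)"
  have z1: "(normsq_x m ^^ a) 0 = 0" for a by (rule lin_zero[OF lin_funpow[OF lin_nx]])
  have z2: "(normsq_u m ^^ b) 0 = 0" for b by (rule lin_zero[OF lin_funpow[OF lin_nu]])
  have props: "\<forall>a \<le> p div 2. \<forall>b \<le> q div 2. Hs0 a b \<in> Pspace m (p - 2*a) (q - 2*b)
          \<and> Delta_x m (Hs0 a b) = 0 \<and> Delta_u m (Hs0 a b) = 0"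
    unfolding Hs0_def using HP Hx Hu zero_Pspace lin_zero[OF lin_Dx] lin_zero[OF lin_Du] by auto
  have sum: "H = (\<Sum>a\<le>p div 2. \<Sum>b\<le>q div 2. (normsq_x m ^^ a) ((normsq_u m ^^ b) (Hs0 a b)))"
    by (subst double_delta) (auto simp: Hs0_def z1 z2)
  show "\<exists>Hs :: nat \<Rightarrow> nat \<Rightarrow> cpoly.
      (\<forall>a \<le> p div 2. \<forall>b \<le> q div 2. Hs a b \<in> Pspace m (p - 2*a) (q - 2*b)
          \<and> Delta_x m (Hs a b) = 0 \<and> Delta_u m (Hs a b) = 0)
      \<and> H = (\<Sum>a\<le>p div 2. \<Sum>b\<le>q div 2. (normsq_x m ^^ a) ((normsq_u m ^^ b) (Hs a b)))
      \<and> H = Hs 0 0"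
    by (rule exI[of _ Hs0]) (use props sum in \<open>simp add: Hs0_def\<close>)
next
  fix H' assume "\<exists>Hs :: nat \<Rightarrow> nat \<Rightarrow> cpoly.
      (\<forall>a \<le> p div 2. \<forall>b \<le> q div 2. Hs a b \<in> Pspace m (p - 2*a) (q - 2*b)
          \<and> Delta_x m (Hs a b) = 0 \<and> Delta_u m (Hs a b) = 0)
      \<and> H = (\<Sum>a\<le>p div 2. \<Sum>b\<le>q div 2. (normsq_x m ^^ a) ((normsq_u m ^^ b) (Hs a b)))
      \<and> H' = Hs 0 0"
  then obtain Hs :: "nat \<Rightarrow> nat \<Rightarrow> cpoly" where
    P1: "\<forall>a \<le> p div 2. \<forall>b \<le> q div 2. Hs a b \<in> Pspace m (p - 2*a) (q - 2*b)
          \<and> Delta_x m (Hs a b) = 0 \<and> Delta_u m (Hs a b) = 0"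
    and P2: "H = (\<Sum>a\<le>p div 2. \<Sum>b\<le>q div 2. (normsq_x m ^^ a) ((normsq_u m ^^ b) (Hs a b)))"
    and P3: "H' = Hs 0 0" by blast
  define T where "T = (\<lambda>a b. (normsq_x m ^^ a) ((normsq_u m ^^ b) (Hs a b)))"
  have fsHs: "fs (Hs a b)" if "a \<le> p div 2" "b \<le> q div 2" for a b
    using P1 that fs_Pspace by blast
  have fsT: "fs (T a b)" if "a \<le> p div 2" "b \<le> q div 2" for a b
    unfolding T_def by (intro fs_nx_pow fs_nu_pow fsHs that)
  have H00: "Delta_x m (Hs 0 0) = 0" "Delta_u m (Hs 0 0) = 0" using P1 by auto
  have T00: "T 0 0 = Hs 0 0" unfolding T_def by simp
  define R where "R = H - Hs 0 0"
  have fsR: "fs R" unfolding R_def using fs_Pspace[OF HP] fsHs[of 0 0] unfolding fs_def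
    by (rule_tac finite_subset[of _ "{\<alpha>. H \<alpha> \<noteq> 0} \<union> {\<alpha>. Hs 0 0 \<alpha> \<noteq> 0}"]) auto
  have Rx: "Delta_x m R = 0" unfolding R_def lin_diff[OF lin_Dx] Hx H00 by simp
  have Ru: "Delta_u m R = 0" unfolding R_def lin_diff[OF lin_Du] Hu H00 by simp
  have fsS: "fs (\<Sum>a\<le>p div 2. \<Sum>b\<le>q div 2. T a b)"
    by (intro fs_sum fsT) auto
  have "fp (\<Sum>a\<le>p div 2. \<Sum>b\<le>q div 2. T a b) R = (\<Sum>a\<le>p div 2. \<Sum>b\<le>q div 2. fp (T a b) R)"
    by (subst fp_sum1) (auto intro!: fs_sum fsT sum.cong fp_sum1)
  also have "\<dots> = fp (T 0 0) R"
    by (rule double_delta) (unfold T_def, rule fpT[OF fsHs Rx Ru])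
  finally have E: "fp (\<Sum>a\<le>p div 2. \<Sum>b\<le>q div 2. T a b) R = fp (T 0 0) R" .
  have Rdef: "R = (\<Sum>a\<le>p div 2. \<Sum>b\<le>q div 2. T a b) - T 0 0"
    unfolding R_def T00 unfolding P2 T_def by (rule refl)
  have "fp R R = fp ((\<Sum>a\<le>p div 2. \<Sum>b\<le>q div 2. T a b) - T 0 0) R"
    by (subst Rdef, rule refl)
  also have "\<dots> = fp (\<Sum>a\<le>p div 2. \<Sum>b\<le>q div 2. T a b) R - fp (T 0 0) R"
    by (rule fp_diff1[OF fsS fsT]) auto
  finally have "fp R R = 0" unfolding E by simp
  then have "R = 0" by (rule fp_pos[OF fsR])
  then show "H' = H" unfolding P3 R_def by simp
qed

lemma smul_add: "smul a P + smul b P = smul (a + b) P" by (simp add: smul_def fun_eq_iff algebra_simps)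
lemma smul_diff: "smul a P - smul b P = smul (a - b) P" by (simp add: smul_def fun_eq_iff algebra_simps)
lemma smul_smul: "smul a (smul b P) = smul (a * b) P" by (simp add: smul_def fun_eq_iff algebra_simps)
lemma smul_nz: "c \<noteq> 0 \<Longrightarrow> P \<noteq> 0 \<Longrightarrow> smul c P \<noteq> 0"
  by (auto simp: smul_def fun_eq_iff)

lemma smul_distrib: "smul c (P + Q) = smul c P + smul c Q" by (simp add: smul_def fun_eq_iff algebra_simps)
lemma smul_zero: "smul c 0 = 0" by (simp add: smul_def fun_eq_iff)
lemma smul_one: "smul 1 P = P" by (simp add: smul_def fun_eq_iff)
lemma smul_sum: "smul c (\<Sum>i\<in>I. f i) = (\<Sum>i\<in>I. smul c (f i))"
proof (induction I rule: infinite_finite_induct)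
  case (infinite A) show ?case unfolding sum.infinite[OF infinite] by (rule smul_zero)
next
  case empty then show ?case unfolding sum.empty by (rule smul_zero)
next
  case (insert x F) show ?case unfolding sum.insert[OF insert(1,2)] smul_distrib insert(3) by (rule refl)
qed
lemma sum_smul: "(\<Sum>i\<in>I. smul (f i) X) = smul (\<Sum>i\<in>I. f i) X"
proof (induction I rule: infinite_finite_induct)
  case (infinite A) show ?case unfolding sum.infinite[OF infinite] by (rule smul_0[symmetric])
next
  case empty then show ?case unfolding sum.empty by (rule smul_0[symmetric])
next
  case (insert x F) show ?case unfolding sum.insert[OF insert(1,2)] insert(3) smul_add by (rule refl)
qed

definition LM2 :: "nat + nat \<Rightarrow> nat + nat \<Rightarrow> cpoly \<Rightarrow> cpoly" where
  "LM2 v1 v2 F = mult_var v1 F + smul \<i> (mult_var v2 F)"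

definition c2 :: "nat + nat \<Rightarrow> nat + nat \<Rightarrow> nat + nat \<Rightarrow> complex" where
  "c2 v1 v2 w = (if w = v1 then 1 else if w = v2 then \<i> else 0)"

lemma lin_LM2: "lin (LM2 v1 v2)"
  unfolding lin_def LM2_def using lin_add[OF lin_mv] lin_smul[OF lin_mv]
  by (auto simp: smul_distrib smul_smul mult.commute)

lemma pd_LM2: "v1 \<noteq> v2 \<Longrightarrow> pderiv_var w (LM2 v1 v2 F) = LM2 v1 v2 (pderiv_var w F) + smul (c2 v1 v2 w) F"
  unfolding LM2_def c2_def
  by (auto simp: pd_add lin_smul[OF lin_pd] pd_mv_if smul_distrib smul_zero smul_one smul_0 add_ac)

lemma LM2_comm: "LM2 a b (LM2 c d F) = LM2 c d (LM2 a b F)"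
  unfolding LM2_def
  by (simp add: mv_add lin_smul[OF lin_mv] smul_distrib smul_smul mv_mv_comm add_ac mult.commute)

lemma xdu_LM2: "v1 \<noteq> v2 \<Longrightarrow> x_du m (LM2 v1 v2 F) = LM2 v1 v2 (x_du m F) + (\<Sum>j<m. smul (c2 v1 v2 (Inr j)) (mult_var (Inl j) F))"
proof -
  assume ne: "v1 \<noteq> v2"
  have "x_du m (LM2 v1 v2 F) = (\<Sum>j<m. mult_var (Inl j) (LM2 v1 v2 (pderiv_var (Inr j) F)) + mult_var (Inl j) (smul (c2 v1 v2 (Inr j)) F))"
    unfolding x_du_def by (simp add: pd_LM2[OF ne] mv_add)
  also have "\<dots> = (\<Sum>j<m. LM2 v1 v2 (mult_var (Inl j) (pderiv_var (Inr j) F))) + (\<Sum>j<m. smul (c2 v1 v2 (Inr j)) (mult_var (Inl j) F))"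
    unfolding sum.distrib
    by (simp add: LM2_def mv_add lin_smul[OF lin_mv] mv_mv_comm)
  also have "\<dots> = LM2 v1 v2 (x_du m F) + (\<Sum>j<m. smul (c2 v1 v2 (Inr j)) (mult_var (Inl j) F))"
    unfolding x_du_def by (simp add: lin_sum[OF lin_LM2])
  finally show ?thesis .
qed

definition gv1 :: "nat \<Rightarrow> nat + nat" where "gv1 i = [Inl 0, Inl 2, Inr 0, Inr 2] ! i"
definition gv2 :: "nat \<Rightarrow> nat + nat" where "gv2 i = [Inl 1, Inl 3, Inr 1, Inr 3] ! i"
definition G :: "nat \<Rightarrow> cpoly \<Rightarrow> cpoly" where "G i = LM2 (gv1 i) (gv2 i)"
definition cg :: "nat \<Rightarrow> nat + nat \<Rightarrow> complex" where "cg i = c2 (gv1 i) (gv2 i)"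

lemma g_ne: "i < 4 \<Longrightarrow> gv1 i \<noteq> gv2 i"
  unfolding gv1_def gv2_def by (auto simp: less_Suc_eq numeral_eq_Suc)

definition one :: cpoly where "one = (\<lambda>\<alpha>. if \<alpha> = 0 then 1 else 0)"

inductive_set Sp :: "cpoly set" where
  Sp_one: "one \<in> Sp"
| Sp_add: "F \<in> Sp \<Longrightarrow> H \<in> Sp \<Longrightarrow> F + H \<in> Sp"
| Sp_smul: "F \<in> Sp \<Longrightarrow> smul c F \<in> Sp"
| Sp_G: "F \<in> Sp \<Longrightarrow> i < 4 \<Longrightarrow> G i F \<in> Sp"

lemma Sp_zero: "0 \<in> Sp" using Sp_smul[OF Sp_one, of 0] by (simp add: smul_0)

lemma pd_one: "pderiv_var w one = 0"
  unfolding pderiv_var_def one_def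
proof (rule ext)
  fix \<alpha> :: mono
  have "\<alpha> + e w \<noteq> 0"
  proof
    assume "\<alpha> + e w = 0"
    then have "lk (\<alpha> + e w) w = 0" by simp
    then show False by simp
  qed
  then show "of_nat (lk \<alpha> w + 1) * (if \<alpha> + e w = 0 then 1 else 0) = (0::cpoly) \<alpha>" by simp
qed

lemma Sp_deriv: "F \<in> Sp \<Longrightarrow> \<exists>Hs. (\<forall>i<4. Hs i \<in> Sp) \<and> (\<forall>w. pderiv_var w F = (\<Sum>i<4. smul (cg i w) (Hs i)))"
proof (induction rule: Sp.induct)
  case Sp_one
  have pd1: "pderiv_var w one = (\<Sum>i<4. smul (cg i w) ((\<lambda>_. (0::cpoly)) i))" for w
    unfolding pd_one smul_zero by simp
  show ?case by (intro exI[of _ "\<lambda>_. (0::cpoly)"] conjI allI impI) (rule Sp_zero, rule pd1)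
next
  case (Sp_add F H)
  then obtain H1 H2 where h1: "\<forall>i<4. H1 i \<in> Sp" "\<forall>w. pderiv_var w F = (\<Sum>i<4. smul (cg i w) (H1 i))"
    and h2: "\<forall>i<4. H2 i \<in> Sp" "\<forall>w. pderiv_var w H = (\<Sum>i<4. smul (cg i w) (H2 i))" by blast
  have a: "\<forall>i<4. H1 i + H2 i \<in> Sp" using h1 h2 by (blast intro: Sp.Sp_add)
  have b: "pderiv_var w (F + H) = (\<Sum>i<4. smul (cg i w) (H1 i + H2 i))" for w
    unfolding pd_add h1(2)[rule_format] h2(2)[rule_format] smul_distrib sum.distrib by (rule refl)
  show ?case by (rule exI[of _ "\<lambda>i. H1 i + H2 i"]) (use a b in blast)
next
  case (Sp_smul F c)
  then obtain H1 where h1: "\<forall>i<4. H1 i \<in> Sp" "\<forall>w. pderiv_var w F = (\<Sum>i<4. smul (cg i w) (H1 i))" by blast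
  have a: "\<forall>i<4. smul c (H1 i) \<in> Sp" using h1 by (blast intro: Sp.Sp_smul)
  have b: "pderiv_var w (smul c F) = (\<Sum>i<4. smul (cg i w) (smul c (H1 i)))" for w
    unfolding lin_smul[OF lin_pd] h1(2)[rule_format] smul_sum smul_smul mult.commute[of c] by (rule refl)
  show ?case by (rule exI[of _ "\<lambda>i. smul c (H1 i)"]) (use a b in blast)
next
  case (Sp_G F i0)
  then obtain H1 where h1: "\<forall>i<4. H1 i \<in> Sp" "\<forall>w. pderiv_var w F = (\<Sum>i<4. smul (cg i w) (H1 i))" by blast
  define H' where "H' = (\<lambda>i. G i0 (H1 i) + (if i = i0 then F else 0))"
  have "\<forall>i<4. H' i \<in> Sp"
    unfolding H'_def using h1(1) Sp_G by (auto intro!: Sp.Sp_add Sp.Sp_G Sp_zero)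
  moreover have "pderiv_var w (G i0 F) = (\<Sum>i<4. smul (cg i w) (H' i))" for w
  proof -
    have "pderiv_var w (G i0 F) = G i0 (pderiv_var w F) + smul (cg i0 w) F"
      unfolding G_def cg_def by (rule pd_LM2[OF g_ne[OF Sp_G(2)]])
    also have "\<dots> = (\<Sum>i<4. smul (cg i w) (G i0 (H1 i))) + smul (cg i0 w) F"
      unfolding h1(2)[rule_format] G_def by (simp add: lin_sum[OF lin_LM2] lin_smul[OF lin_LM2])
    also have "\<dots> = (\<Sum>i<4. smul (cg i w) (H' i))"
    proof -
      have d: "(\<Sum>i<4. smul (cg i w) (if i = i0 then F else 0)) = (\<Sum>i<(4::nat). if i0 = i then smul (cg i0 w) F else 0)"
        by (rule sum.cong[OF refl]) (auto simp: smul_zero)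
      have d2: "(\<Sum>i<(4::nat). if i0 = i then smul (cg i0 w) F else 0) = smul (cg i0 w) F"
        using Sp_G(2) by (subst sum.delta') auto
      show ?thesis unfolding H'_def smul_distrib sum.distrib d d2 by (rule refl)
    qed
    finally show ?thesis .
  qed
  ultimately show ?case by blast
qed


lemma second_zero:
  assumes F: "F \<in> Sp"
    and C: "\<And>i k. i < 4 \<Longrightarrow> k < 4 \<Longrightarrow> (\<Sum>j\<in>J. cg i (b j) * cg k (a j)) = 0"
  shows "(\<Sum>j\<in>J. pderiv_var (a j) (pderiv_var (b j) F)) = 0"
proof -
  obtain Hs where h: "\<forall>i<4. Hs i \<in> Sp" "\<forall>w. pderiv_var w F = (\<Sum>i<4. smul (cg i w) (Hs i))"
    using Sp_deriv[OF F] by blast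
  have "\<forall>i. \<exists>K. i < 4 \<longrightarrow> (\<forall>w. pderiv_var w (Hs i) = (\<Sum>k<4. smul (cg k w) (K k)))"
    using h(1) Sp_deriv by blast
  then obtain K where K: "\<And>i w. i < 4 \<Longrightarrow> pderiv_var w (Hs i) = (\<Sum>k<4. smul (cg k w) (K i k))"
    by metis
  have step: "pderiv_var (a j) (pderiv_var (b j) F) = (\<Sum>i<4. \<Sum>k<4. smul (cg i (b j) * cg k (a j)) (K i k))" for j
  proof -
    have "pderiv_var (a j) (pderiv_var (b j) F) = (\<Sum>i<4. smul (cg i (b j)) (pderiv_var (a j) (Hs i)))"
      unfolding h(2)[rule_format] pd_sum lin_smul[OF lin_pd] by (rule refl)
    also have "\<dots> = (\<Sum>i<4. smul (cg i (b j)) (\<Sum>k<4. smul (cg k (a j)) (K i k)))"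
      by (rule sum.cong[OF refl]) (simp add: K)
    also have "\<dots> = (\<Sum>i<4. \<Sum>k<4. smul (cg i (b j) * cg k (a j)) (K i k))"
      unfolding smul_sum smul_smul by (rule refl)
    finally show ?thesis .
  qed
  have "(\<Sum>j\<in>J. pderiv_var (a j) (pderiv_var (b j) F)) = (\<Sum>j\<in>J. \<Sum>i<4. \<Sum>k<4. smul (cg i (b j) * cg k (a j)) (K i k))"
    unfolding step by (rule refl)
  also have "\<dots> = (\<Sum>i<4. \<Sum>k<4. \<Sum>j\<in>J. smul (cg i (b j) * cg k (a j)) (K i k))"
    by (subst sum.swap, rule sum.cong[OF refl], rule sum.swap)
  also have "\<dots> = (\<Sum>i<4. \<Sum>k<4. smul (\<Sum>j\<in>J. cg i (b j) * cg k (a j)) (K i k))"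
    unfolding sum_smul by (rule refl)
  also have "\<dots> = (\<Sum>i<(4::nat). \<Sum>k<(4::nat). (0::cpoly))"
    by (intro sum.cong refl) (simp add: C smul_0)
  also have "\<dots> = 0" by simp
  finally show ?thesis .
qed

lemma sum_upto4: "(m::nat) \<ge> 4 \<Longrightarrow> (\<And>j. j \<ge> 4 \<Longrightarrow> f j = 0) \<Longrightarrow> (\<Sum>j<m. f j) = f 0 + f 1 + f 2 + (f 3 :: complex)"
proof -
  assume m: "m \<ge> 4" and z: "\<And>j. j \<ge> 4 \<Longrightarrow> f j = 0"
  have "(\<Sum>j<m. f j) = (\<Sum>j<4. f j)"
    by (rule sum.mono_neutral_right) (use m z in auto)
  also have "\<dots> = f 0 + f 1 + f 2 + f 3" by (simp add: numeral_eq_Suc)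
  finally show ?thesis .
qed

lemma cg_cases: "i < 4 \<Longrightarrow> i = 0 \<or> i = 1 \<or> i = 2 \<or> i = (3::nat)" by auto

lemma cg0: "cg 0 w = (if w = Inl 0 then 1 else if w = Inl 1 then \<i> else 0)" by (simp add: cg_def c2_def gv1_def gv2_def)
lemma cg1: "cg 1 w = (if w = Inl 2 then 1 else if w = Inl 3 then \<i> else 0)" by (simp add: cg_def c2_def gv1_def gv2_def)
lemma cg1': "cg (Suc 0) w = (if w = Inl 2 then 1 else if w = Inl 3 then \<i> else 0)" by (simp add: cg_def c2_def gv1_def gv2_def)
lemma cg2: "cg 2 w = (if w = Inr 0 then 1 else if w = Inr 1 then \<i> else 0)" by (simp add: cg_def c2_def gv1_def gv2_def numeral_eq_Suc)
lemma cg3: "cg 3 w = (if w = Inr 2 then 1 else if w = Inr 3 then \<i> else 0)" by (simp add: cg_def c2_def gv1_def gv2_def numeral_eq_Suc)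

lemma C_gen:
  assumes m: "(m::nat) \<ge> 4" and i: "i < 4" and k: "k < 4" and ab: "(a = Inl \<and> b = Inl) \<or> (a = Inr \<and> b = Inr) \<or> (a = Inl \<and> b = Inr)"
  shows "(\<Sum>j<m. cg i (a j) * cg k (b j)) = 0"
proof -
  have z: "cg i (a j) * cg k (b j) = 0" if "j \<ge> 4" for j
    using cg_cases[OF i] ab that by (elim disjE) (auto simp: cg0 cg1 cg1' cg2 cg3)
  show ?thesis
    apply (subst sum_upto4[OF m z], assumption)
    using cg_cases[OF i] cg_cases[OF k] ab by (elim disjE) (simp_all add: cg0 cg1 cg1' cg2 cg3)
qed

lemma Sp_harm: "m \<ge> 4 \<Longrightarrow> F \<in> Sp \<Longrightarrow> Delta_x m F = 0 \<and> Delta_u m F = 0 \<and> du_dx m F = 0"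
  unfolding Delta_x_def Delta_u_def du_dx_def
  by (intro conjI second_zero) (auto intro: C_gen)


lemma sum_upto2: "(m::nat) \<ge> 2 \<Longrightarrow> (\<And>j. j \<ge> 2 \<Longrightarrow> f j = 0) \<Longrightarrow> (\<Sum>j<m. f j) = f 0 + (f 1 :: 'a::comm_monoid_add)"
proof -
  assume m: "m \<ge> 2" and z: "\<And>j. j \<ge> 2 \<Longrightarrow> f j = 0"
  have "(\<Sum>j<m. f j) = (\<Sum>j<2. f j)"
    by (rule sum.mono_neutral_right) (use m z in auto)
  also have "\<dots> = f 0 + f 1" by (simp add: numeral_eq_Suc)
  finally show ?thesis .
qed

lemma sum_upto4': "(m::nat) \<ge> 4 \<Longrightarrow> (\<And>j. j \<ge> 4 \<Longrightarrow> f j = 0) \<Longrightarrow> (\<Sum>j<m. f j) = f 0 + f 1 + f 2 + (f 3 :: 'a::comm_monoid_add)"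
proof -
  assume m: "m \<ge> 4" and z: "\<And>j. j \<ge> 4 \<Longrightarrow> f j = 0"
  have "(\<Sum>j<m. f j) = (\<Sum>j<4. f j)"
    by (rule sum.mono_neutral_right) (use m z in auto)
  also have "\<dots> = f 0 + f 1 + f 2 + f 3" by (simp add: numeral_eq_Suc)
  finally show ?thesis .
qed

lemma G0_def': "G 0 = LM2 (Inl 0) (Inl 1)" by (simp add: G_def gv1_def gv2_def)
lemma G1_def': "G 1 = LM2 (Inl 2) (Inl 3)" by (simp add: G_def gv1_def gv2_def)
lemma G2_def': "G 2 = LM2 (Inr 0) (Inr 1)" by (simp add: G_def gv1_def gv2_def numeral_eq_Suc)
lemma G3_def': "G 3 = LM2 (Inr 2) (Inr 3)" by (simp add: G_def gv1_def gv2_def numeral_eq_Suc)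

lemma xdu_G0: "x_du m (G 0 F) = G 0 (x_du m F)"
  unfolding G0_def' by (subst xdu_LM2) (auto simp: c2_def smul_0)
lemma xdu_G1: "x_du m (G 1 F) = G 1 (x_du m F)"
  unfolding G1_def' by (subst xdu_LM2) (auto simp: c2_def smul_0)
lemma xdu_G2: "m \<ge> 4 \<Longrightarrow> x_du m (G 2 F) = G 2 (x_du m F) + G 0 F"
proof -
  assume m: "m \<ge> 4"
  have "(\<Sum>j<m. smul (c2 (Inr 0) (Inr 1) (Inr j)) (mult_var (Inl j) F)) = LM2 (Inl 0) (Inl 1) F"
    by (subst sum_upto2) (use m in \<open>auto simp: c2_def smul_0 smul_one LM2_def\<close>)
  then show ?thesis unfolding G0_def' G2_def' by (subst xdu_LM2) auto
qed
lemma xdu_G3: "m \<ge> 4 \<Longrightarrow> x_du m (G 3 F) = G 3 (x_du m F) + G 1 F"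
proof -
  assume m: "m \<ge> 4"
  have "(\<Sum>j<m. smul (c2 (Inr 2) (Inr 3) (Inr j)) (mult_var (Inl j) F)) = LM2 (Inl 2) (Inl 3) F"
    by (subst sum_upto4') (use m in \<open>auto simp: c2_def smul_0 smul_one LM2_def\<close>)
  then show ?thesis unfolding G1_def' G3_def' by (subst xdu_LM2) auto
qed

definition Wop :: "cpoly \<Rightarrow> cpoly" where "Wop F = G 0 (G 3 F) + smul (-1) (G 1 (G 2 F))"

lemma lin_G: "lin (G i)" unfolding G_def by (rule lin_LM2)

lemma G_comm: "G i (G j F) = G j (G i F)" unfolding G_def by (rule LM2_comm)

lemma xdu_W: "m \<ge> 4 \<Longrightarrow> x_du m (Wop F) = Wop (x_du m F)"
proof -
  assume m: "m \<ge> 4"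
  have "x_du m (Wop F) = G 0 (G 3 (x_du m F)) + G 0 (G 1 F) + smul (-1) (G 1 (G 2 (x_du m F))) + smul (-1) (G 1 (G 0 F))"
    unfolding Wop_def lin_add[OF lin_xdu] lin_smul[OF lin_xdu] xdu_G0 xdu_G1 xdu_G2[OF m] xdu_G3[OF m]
      lin_add[OF lin_G] smul_distrib by (simp add: add_ac)
  also have "\<dots> = (G 0 (G 3 (x_du m F)) + smul (-1) (G 1 (G 2 (x_du m F)))) + (G 0 (G 1 F) + smul (-1) (G 1 (G 0 F)))"
    by (simp only: add_ac)
  also have "G 0 (G 1 F) + smul (-1) (G 1 (G 0 F)) = 0"
    unfolding G_comm[of 1 0] by (simp add: smul_def fun_eq_iff)
  finally have "x_du m (Wop F) = (G 0 (G 3 (x_du m F)) + smul (-1) (G 1 (G 2 (x_du m F)))) + 0" .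
  then show ?thesis unfolding Wop_def[of "x_du m F"] by (simp only: add_0_right)
qed

lemma xdu_one: "x_du m one = 0"
  unfolding x_du_def pd_one lin_zero[OF lin_mv] by simp

definition P0 :: "nat \<Rightarrow> nat \<Rightarrow> cpoly" where "P0 k l = (G 0 ^^ (k - l)) ((Wop ^^ l) one)"

lemma xdu_P0: "m \<ge> 4 \<Longrightarrow> x_du m (P0 k l) = 0"
proof -
  assume m: "m \<ge> 4"
  have W0: "Wop 0 = 0" unfolding Wop_def lin_zero[OF lin_G] smul_zero by simp
  have a: "x_du m ((Wop ^^ n) one) = 0" for n
  proof (induction n)
    case 0 show ?case unfolding funpow_0 by (rule xdu_one)
  next
    case (Suc n) show ?case unfolding funpow.simps comp_apply xdu_W[OF m] Suc W0 by (rule refl)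
  qed
  have b: "x_du m ((G 0 ^^ n) Y) = (G 0 ^^ n) (x_du m Y)" for n Y
    by (induction n) (simp_all add: xdu_G0)
  have c: "(G 0 ^^ n) 0 = 0" for n by (rule lin_zero[OF lin_funpow[OF lin_G]])
  show ?thesis unfolding P0_def b a c by (rule refl)
qed

lemma Sp_W: "F \<in> Sp \<Longrightarrow> Wop F \<in> Sp"
  unfolding Wop_def by (intro Sp_add Sp_smul Sp_G) auto

lemma Sp_P0: "P0 k l \<in> Sp"
proof -
  have a: "(Wop ^^ n) one \<in> Sp" for n by (induction n) (auto intro: Sp_one Sp_W)
  have b: "Y \<in> Sp \<Longrightarrow> (G 0 ^^ n) Y \<in> Sp" for n Y by (induction n) (auto intro: Sp_G)
  show ?thesis unfolding P0_def by (rule b[OF a])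
qed


lemma mv_nz: "mult_var v P \<alpha> \<noteq> 0 \<Longrightarrow> 0 < lk \<alpha> v \<and> P (\<alpha> - e v) \<noteq> 0"
  unfolding mult_var_def by (auto split: if_splits)

lemma mv_Pspace_x:
  assumes P: "P \<in> Pspace m p q" and j: "j < m"
  shows "mult_var (Inl j) P \<in> Pspace m (p + 1) q"
proof -
  have fin: "finite {\<alpha>. mult_var (Inl j) P \<alpha> \<noteq> 0}" using fs_mv[OF fs_Pspace[OF P]] unfolding fs_def .
  have "Poly_Mapping.keys \<alpha> \<subseteq> V m \<and> xdeg m \<alpha> = p + 1 \<and> udeg m \<alpha> = q" if nz: "mult_var (Inl j) P \<alpha> \<noteq> 0" for \<alpha>
  proof -
    define \<beta> where "\<beta> = \<alpha> - e (Inl j)"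
    have a: "0 < lk \<alpha> (Inl j)" "P \<beta> \<noteq> 0" using mv_nz[OF nz] unfolding \<beta>_def by auto
    have Pb: "Poly_Mapping.keys \<beta> \<subseteq> V m" "xdeg m \<beta> = p" "udeg m \<beta> = q"
      using Pspace_nz[OF P a(2)] by auto
    have lx: "lk \<alpha> (Inl i) = lk \<beta> (Inl i) + (if i = j then 1 else 0)" for i
      unfolding \<beta>_def using a(1) by auto
    have lu: "lk \<alpha> (Inr i) = lk \<beta> (Inr i)" for i unfolding \<beta>_def by simp
    have "xdeg m \<alpha> = xdeg m \<beta> + 1" unfolding xdeg_def lx using j by (rule sum_delta_nat)
    moreover have "udeg m \<alpha> = udeg m \<beta>" unfolding udeg_def lu by (rule refl)
    moreover have "Poly_Mapping.keys \<alpha> \<subseteq> V m"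
    proof
      fix w assume w: "w \<in> Poly_Mapping.keys \<alpha>"
      show "w \<in> V m"
      proof (cases "w = Inl j")
        case True then show ?thesis using j by auto
      next
        case False
        then have "lk \<beta> w = lk \<alpha> w" unfolding \<beta>_def by auto
        then have "w \<in> Poly_Mapping.keys \<beta>" using w by (simp add: in_keys_iff)
        then show ?thesis using Pb(1) by blast
      qed
    qed
    ultimately show ?thesis using Pb by simp
  qed
  then show ?thesis using fin unfolding Pspace_def by (simp only: mem_Collect_eq) blast
qed

lemma mv_Pspace_u:
  assumes P: "P \<in> Pspace m p q" and j: "j < m"
  shows "mult_var (Inr j) P \<in> Pspace m p (q + 1)"
proof -
  have fin: "finite {\<alpha>. mult_var (Inr j) P \<alpha> \<noteq> 0}" using fs_mv[OF fs_Pspace[OF P]] unfolding fs_def .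
  have "Poly_Mapping.keys \<alpha> \<subseteq> V m \<and> xdeg m \<alpha> = p \<and> udeg m \<alpha> = q + 1" if nz: "mult_var (Inr j) P \<alpha> \<noteq> 0" for \<alpha>
  proof -
    define \<beta> where "\<beta> = \<alpha> - e (Inr j)"
    have a: "0 < lk \<alpha> (Inr j)" "P \<beta> \<noteq> 0" using mv_nz[OF nz] unfolding \<beta>_def by auto
    have Pb: "Poly_Mapping.keys \<beta> \<subseteq> V m" "xdeg m \<beta> = p" "udeg m \<beta> = q"
      using Pspace_nz[OF P a(2)] by auto
    have lu: "lk \<alpha> (Inr i) = lk \<beta> (Inr i) + (if i = j then 1 else 0)" for i
      unfolding \<beta>_def using a(1) by auto
    have lx: "lk \<alpha> (Inl i) = lk \<beta> (Inl i)" for i unfolding \<beta>_def by simp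
    have "udeg m \<alpha> = udeg m \<beta> + 1" unfolding udeg_def lu using j by (rule sum_delta_nat)
    moreover have "xdeg m \<alpha> = xdeg m \<beta>" unfolding xdeg_def lx by (rule refl)
    moreover have "Poly_Mapping.keys \<alpha> \<subseteq> V m"
    proof
      fix w assume w: "w \<in> Poly_Mapping.keys \<alpha>"
      show "w \<in> V m"
      proof (cases "w = Inr j")
        case True then show ?thesis using j by auto
      next
        case False
        then have "lk \<beta> w = lk \<alpha> w" unfolding \<beta>_def by auto
        then have "w \<in> Poly_Mapping.keys \<beta>" using w by (simp add: in_keys_iff)
        then show ?thesis using Pb(1) by blast
      qed
    qed
    ultimately show ?thesis using Pb by simp
  qed
  then show ?thesis using fin unfolding Pspace_def by (simp only: mem_Collect_eq) blast
qed

lemma add_Pspace: "P \<in> Pspace m p q \<Longrightarrow> Q \<in> Pspace m p q \<Longrightarrow> P + Q \<in> Pspace m p q"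
proof -
  assume P: "P \<in> Pspace m p q" and Q: "Q \<in> Pspace m p q"
  have fin: "finite {\<alpha>. (P + Q) \<alpha> \<noteq> 0}" using fs_add[OF fs_Pspace[OF P] fs_Pspace[OF Q]] unfolding fs_def .
  have "Poly_Mapping.keys \<alpha> \<subseteq> V m \<and> xdeg m \<alpha> = p \<and> udeg m \<alpha> = q" if "(P + Q) \<alpha> \<noteq> 0" for \<alpha>
  proof -
    have "P \<alpha> \<noteq> 0 \<or> Q \<alpha> \<noteq> 0" using that by auto
    then show ?thesis using Pspace_nz[OF P] Pspace_nz[OF Q] by blast
  qed
  then show ?thesis using fin unfolding Pspace_def by (simp only: mem_Collect_eq) blast
qed

lemma smul_Pspace: "P \<in> Pspace m p q \<Longrightarrow> smul c P \<in> Pspace m p q"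
proof -
  assume P: "P \<in> Pspace m p q"
  have fin: "finite {\<alpha>. smul c P \<alpha> \<noteq> 0}"
    using fs_Pspace[OF P] unfolding fs_def smul_def by (rule rev_finite_subset) auto
  have "Poly_Mapping.keys \<alpha> \<subseteq> V m \<and> xdeg m \<alpha> = p \<and> udeg m \<alpha> = q" if "smul c P \<alpha> \<noteq> 0" for \<alpha>
  proof -
    have "P \<alpha> \<noteq> 0" using that by (auto simp: smul_def)
    then show ?thesis using Pspace_nz[OF P] by blast
  qed
  then show ?thesis using fin unfolding Pspace_def by (simp only: mem_Collect_eq) blast
qed

lemma one_Pspace: "one \<in> Pspace m 0 0"
  unfolding Pspace_def one_def xdeg_def udeg_def by auto

lemma LM2_Pspace_x: "P \<in> Pspace m p q \<Longrightarrow> j1 < m \<Longrightarrow> j2 < m \<Longrightarrow> LM2 (Inl j1) (Inl j2) P \<in> Pspace m (p + 1) q"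
  unfolding LM2_def by (intro add_Pspace smul_Pspace mv_Pspace_x)
lemma LM2_Pspace_u: "P \<in> Pspace m p q \<Longrightarrow> j1 < m \<Longrightarrow> j2 < m \<Longrightarrow> LM2 (Inr j1) (Inr j2) P \<in> Pspace m p (q + 1)"
  unfolding LM2_def by (intro add_Pspace smul_Pspace mv_Pspace_u)

lemma G0_Pspace: "m > 4 \<Longrightarrow> P \<in> Pspace m p q \<Longrightarrow> G 0 P \<in> Pspace m (p + 1) q"
  unfolding G0_def' by (rule LM2_Pspace_x) auto
lemma G1_Pspace: "m > 4 \<Longrightarrow> P \<in> Pspace m p q \<Longrightarrow> G 1 P \<in> Pspace m (p + 1) q"
  unfolding G1_def' by (rule LM2_Pspace_x) auto
lemma G2_Pspace: "m > 4 \<Longrightarrow> P \<in> Pspace m p q \<Longrightarrow> G 2 P \<in> Pspace m p (q + 1)"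
  unfolding G2_def' by (rule LM2_Pspace_u) auto
lemma G3_Pspace: "m > 4 \<Longrightarrow> P \<in> Pspace m p q \<Longrightarrow> G 3 P \<in> Pspace m p (q + 1)"
  unfolding G3_def' by (rule LM2_Pspace_u) auto

lemma W_Pspace: "m > 4 \<Longrightarrow> P \<in> Pspace m p q \<Longrightarrow> Wop P \<in> Pspace m (p + 1) (q + 1)"
  unfolding Wop_def
  by (intro add_Pspace smul_Pspace G0_Pspace G1_Pspace G2_Pspace G3_Pspace)
lemma P0_Pspace: "m > 4 \<Longrightarrow> l \<le> k \<Longrightarrow> P0 k l \<in> Pspace m k l"
proof -
  assume m: "m > 4" and lk: "l \<le> k"
  have a: "(Wop ^^ n) one \<in> Pspace m n n" for n
  proof (induction n)
    case 0 show ?case using one_Pspace by simp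
  next
    case (Suc n) show ?case using W_Pspace[OF m Suc] by simp
  qed
  have b: "Y \<in> Pspace m p q \<Longrightarrow> (G 0 ^^ n) Y \<in> Pspace m (p + n) q" for n Y p q
  proof (induction n)
    case 0 then show ?case by simp
  next
    case (Suc n) show ?case using G0_Pspace[OF m Suc.IH[OF Suc.prems]] by simp
  qed
  show ?thesis unfolding P0_def using b[OF a[of l], of "k - l"] lk by simp
qed


definition KK :: "(nat + nat) set" where "KK = {Inl 0, Inr 2}"
definition Rz :: "cpoly \<Rightarrow> cpoly" where "Rz P = (\<lambda>\<alpha>. if Poly_Mapping.keys \<alpha> \<subseteq> KK then P \<alpha> else 0)"

lemma lin_Rz: "lin Rz" unfolding lin_def Rz_def smul_def by (auto simp: fun_eq_iff)

lemma keys_minus_e: "0 < lk \<alpha> v \<Longrightarrow> v \<in> KK \<Longrightarrow> (Poly_Mapping.keys (\<alpha> - e v) \<subseteq> KK) = (Poly_Mapping.keys \<alpha> \<subseteq> KK)"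
proof
  assume a: "0 < lk \<alpha> v" "v \<in> KK" "Poly_Mapping.keys (\<alpha> - e v) \<subseteq> KK"
  show "Poly_Mapping.keys \<alpha> \<subseteq> KK"
  proof
    fix w assume w: "w \<in> Poly_Mapping.keys \<alpha>"
    show "w \<in> KK"
    proof (cases "w = v")
      case True then show ?thesis using a by simp
    next
      case False
      then have "lk (\<alpha> - e v) w = lk \<alpha> w" by simp
      then have "w \<in> Poly_Mapping.keys (\<alpha> - e v)" using w by (simp add: in_keys_iff)
      then show ?thesis using a by blast
    qed
  qed
next
  assume a: "0 < lk \<alpha> v" "v \<in> KK" "Poly_Mapping.keys \<alpha> \<subseteq> KK"
  show "Poly_Mapping.keys (\<alpha> - e v) \<subseteq> KK"
  proof
    fix w assume w: "w \<in> Poly_Mapping.keys (\<alpha> - e v)"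
    then have "lk (\<alpha> - e v) w \<noteq> 0" by (simp add: in_keys_iff)
    then have "lk \<alpha> w \<noteq> 0" by simp
    then show "w \<in> KK" using a by (auto simp: in_keys_iff)
  qed
qed

lemma Rz_mv_in: "v \<in> KK \<Longrightarrow> Rz (mult_var v P) = mult_var v (Rz P)"
proof (rule ext)
  fix \<alpha> assume v: "v \<in> KK"
  show "Rz (mult_var v P) \<alpha> = mult_var v (Rz P) \<alpha>"
  proof (cases "0 < lk \<alpha> v")
    case True
    have k: "(Poly_Mapping.keys (\<alpha> - e v) \<subseteq> KK) = (Poly_Mapping.keys \<alpha> \<subseteq> KK)" by (rule keys_minus_e[OF True v])
    show ?thesis unfolding Rz_def mult_var_def k using True by simp
  next
    case False then show ?thesis unfolding Rz_def mult_var_def by simp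
  qed
qed

lemma Rz_mv_out: "v \<notin> KK \<Longrightarrow> Rz (mult_var v P) = 0"
proof (rule ext)
  fix \<alpha> assume v: "v \<notin> KK"
  show "Rz (mult_var v P) \<alpha> = (0::cpoly) \<alpha>"
  proof (cases "0 < lk \<alpha> v")
    case True
    then have "v \<in> Poly_Mapping.keys \<alpha>" by (simp add: in_keys_iff)
    then have "\<not> Poly_Mapping.keys \<alpha> \<subseteq> KK" using v by blast
    then show ?thesis unfolding Rz_def by simp
  next
    case False then show ?thesis unfolding Rz_def mult_var_def by simp
  qed
qed

lemma Rz_one: "Rz one = one" unfolding Rz_def one_def by (rule ext) auto

lemma Rz_G0: "Rz (G 0 F) = mult_var (Inl 0) (Rz F)"
  unfolding G0_def' LM2_def lin_add[OF lin_Rz] lin_smul[OF lin_Rz]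
  by (simp add: Rz_mv_in Rz_mv_out KK_def smul_zero)
lemma Rz_G1: "Rz (G 1 F) = 0"
  unfolding G1_def' LM2_def lin_add[OF lin_Rz] lin_smul[OF lin_Rz]
  by (simp add: Rz_mv_in Rz_mv_out KK_def smul_zero)
lemma Rz_G2: "Rz (G 2 F) = 0"
  unfolding G2_def' LM2_def lin_add[OF lin_Rz] lin_smul[OF lin_Rz]
  by (simp add: Rz_mv_in Rz_mv_out KK_def smul_zero)
lemma Rz_G3: "Rz (G 3 F) = mult_var (Inr 2) (Rz F)"
  unfolding G3_def' LM2_def lin_add[OF lin_Rz] lin_smul[OF lin_Rz]
  by (simp add: Rz_mv_in Rz_mv_out KK_def smul_zero)

lemma Rz_W: "Rz (Wop F) = mult_var (Inl 0) (mult_var (Inr 2) (Rz F))"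
proof -
  show ?thesis unfolding Wop_def lin_add[OF lin_Rz] lin_smul[OF lin_Rz] Rz_G1 Rz_G0 Rz_G3 smul_zero by simp
qed

lemma mv_eval: "mult_var v Q (\<alpha> + e v) = Q \<alpha>"
  unfolding mult_var_def by simp

lemma single_suc: "\<alpha> + Poly_Mapping.single v (Suc n) = (\<alpha> + Poly_Mapping.single v n) + e v"
  by (rule poly_mapping_eqI) simp

lemma pow_eval1: "(mult_var v ^^ n) Q (\<alpha> + Poly_Mapping.single v n) = Q \<alpha>"
proof (induction n)
  case 0 then show ?case by simp
next
  case (Suc n)
  show ?case unfolding single_suc funpow.simps comp_apply mv_eval Suc by (rule refl)
qed

lemma pow_eval2: "((\<lambda>F. mult_var a (mult_var b F)) ^^ n) Q (\<alpha> + Poly_Mapping.single a n + Poly_Mapping.single b n) = Q \<alpha>"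
proof (induction n)
  case 0 then show ?case by simp
next
  case (Suc n)
  have eq: "\<alpha> + Poly_Mapping.single a (Suc n) + Poly_Mapping.single b (Suc n) =
     ((\<alpha> + Poly_Mapping.single a n + Poly_Mapping.single b n) + e b) + e a"
    by (rule poly_mapping_eqI) simp
  show ?case unfolding eq funpow.simps comp_apply mv_eval Suc by (rule refl)
qed

lemma P0_nz: "P0 k l \<noteq> 0"
proof
  assume z: "P0 k l = 0"
  have RW: "Rz ((Wop ^^ n) one) = ((\<lambda>F. mult_var (Inl 0) (mult_var (Inr 2) F)) ^^ n) one" for n
    by (induction n) (simp_all add: Rz_one Rz_W)
  have RG: "Rz ((G 0 ^^ n) Y) = (mult_var (Inl 0) ^^ n) (Rz Y)" for n Y
    by (induction n) (simp_all add: Rz_G0)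
  have "Rz (P0 k l) = (mult_var (Inl 0) ^^ (k - l)) (((\<lambda>F. mult_var (Inl 0) (mult_var (Inr 2) F)) ^^ l) one)"
    unfolding P0_def RG RW by (rule refl)
  then have "Rz (P0 k l) ((0 + Poly_Mapping.single (Inl 0) l + Poly_Mapping.single (Inr 2) l) + Poly_Mapping.single (Inl 0) (k - l)) = 1"
    by (simp only: pow_eval1 pow_eval2) (simp add: one_def)
  moreover have "Rz (P0 k l) = 0" unfolding z by (rule lin_zero[OF lin_Rz])
  ultimately show False by simp
qed

lemma witness: "m > 4 \<Longrightarrow> l \<le> k \<Longrightarrow> \<exists>P \<in> Hspace m k l. P \<noteq> 0"
proof -
  assume m: "m > 4" and lk: "l \<le> k"
  have h: "Delta_x m (P0 k l) = 0 \<and> Delta_u m (P0 k l) = 0 \<and> du_dx m (P0 k l) = 0"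
    using Sp_harm[OF _ Sp_P0] m by simp
  have "P0 k l \<in> Hspace m k l"
    unfolding Hspace_def using P0_Pspace[OF m lk] h xdu_P0[of m k l] m by simp
  then show ?thesis using P0_nz by blast
qed

lemma C4': "x_du m (u_dx m Q) = u_dx m (x_du m Q) + Ex m Q - Eu m Q"
  using C4[of m Q] by (simp add: algebra_simps eq_diff_eq)

context
  fixes m k l :: nat and P :: cpoly
  assumes PH: "P \<in> Hspace m k l"
begin

abbreviation v where "v j \<equiv> (u_dx m ^^ j) P"

lemma PH': "P \<in> Pspace m k l" "Delta_x m P = 0" "Delta_u m P = 0" "du_dx m P = 0" "x_du m P = 0"
proof -
  have "P \<in> Pspace m k l \<and> Delta_x m P = 0 \<and> Delta_u m P = 0 \<and> du_dx m P = 0 \<and> x_du m P = 0"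
    using PH unfolding Hspace_def by (simp only: mem_Collect_eq)
  then show "P \<in> Pspace m k l" "Delta_x m P = 0" "Delta_u m P = 0" "du_dx m P = 0" "x_du m P = 0"
    by blast+
qed

lemma chain: "v j \<in> Pspace m (k - j) (l + j) \<and> Delta_x m (v j) = 0 \<and> Delta_u m (v j) = 0 \<and> du_dx m (v j) = 0"
proof (induction j)
  case 0 then show ?case using PH' by (simp only: funpow_0 diff_zero add_0_right)
next
  case (Suc j)
  from Suc.IH have IH: "v j \<in> Pspace m (k - j) (l + j)" "Delta_x m (v j) = 0" "Delta_u m (v j) = 0" "du_dx m (v j) = 0"
    by blast+
  have vS: "v (Suc j) = u_dx m (v j)" by simp
  have z: "u_dx m 0 = 0" by (rule lin_zero[OF lin_udx])
  have "u_dx m (v j) \<in> Pspace m (k - Suc j) (l + Suc j)"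
  proof -
    have "k - Suc j = k - j - 1" "l + Suc j = l + j + 1" by simp_all
    then show ?thesis using udx_Pspace[OF IH(1)] by (simp only:)
  qed
  moreover have "Delta_x m (u_dx m (v j)) = 0" unfolding C1 IH z by (rule refl)
  moreover have "Delta_u m (u_dx m (v j)) = 0" unfolding C2 IH z by simp
  moreover have "du_dx m (u_dx m (v j)) = 0" unfolding C3 IH z by simp
  ultimately show ?case unfolding vS by blast
qed

lemma Su_pow_v: "S_u_pow m j k l P = v j"
proof (induction j)
  case 0 then show ?case by (simp only: S_u_pow.simps funpow_0)
next
  case (Suc j)
  have c: "v j \<in> Pspace m (k - j) (l + j)" using chain by blast
  have c2: "Delta_x m (v (Suc j)) = 0" "Delta_u m (v (Suc j)) = 0" using chain[of "Suc j"] by blast+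
  have vS: "v (Suc j) = u_dx m (v j)" by (simp only: funpow.simps comp_apply)
  have "S_u_pow m (Suc j) k l P = pi_s m (k - j - 1) (l + j + 1) (u_dx m (v j))"
    by (simp only: S_u_pow.simps Suc.IH S_u_def)
  also have "\<dots> = u_dx m (v j)"
  proof (rule pi_s_id)
    show "u_dx m (v j) \<in> Pspace m (k - j - 1) (l + j + 1)" using udx_Pspace[OF c] .
    show "Delta_x m (u_dx m (v j)) = 0" using c2(1) unfolding vS .
    show "Delta_u m (u_dx m (v j)) = 0" using c2(2) unfolding vS .
  qed
  finally show ?case unfolding vS .
qed

lemma xdu_chain: "j \<le> k \<Longrightarrow> x_du m (v (Suc j)) = smul (of_int ((int j + 1) * (int k - int l - int j))) (v j)"
proof (induction j)
  case 0
  have "x_du m P = 0" using PH by (simp add: Hspace_def)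
  moreover have "Ex m P = smul (of_nat k) P" "Eu m P = smul (of_nat l) P"
    using chain[of 0] Euler_x Euler_u by auto
  ultimately show ?case by (simp add: C4' lin_zero[OF lin_udx] smul_diff)
next
  case (Suc j)
  then have IH: "x_du m (v (Suc j)) = smul (of_int ((int j + 1) * (int k - int l - int j))) (v j)" by simp
  have c: "v (Suc j) \<in> Pspace m (k - Suc j) (l + Suc j)" using chain by blast
  have "Ex m (v (Suc j)) = smul (of_int (int k - int j - 1)) (v (Suc j))"
    using Euler_x[OF c] Suc.prems by (simp add: of_nat_diff algebra_simps)
  moreover have "Eu m (v (Suc j)) = smul (of_int (int l + int j + 1)) (v (Suc j))"
    using Euler_u[OF c] by (simp add: algebra_simps)
  ultimately have ExEu: "Ex m (v (Suc j)) = smul (of_int (int k - int j - 1)) (v (Suc j))"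
    "Eu m (v (Suc j)) = smul (of_int (int l + int j + 1)) (v (Suc j))" by auto
  have vS: "v (Suc (Suc j)) = u_dx m (v (Suc j))" "v (Suc j) = u_dx m (v j)" by simp_all
  have "x_du m (v (Suc (Suc j))) = u_dx m (x_du m (v (Suc j))) + Ex m (v (Suc j)) - Eu m (v (Suc j))"
    unfolding vS(1) by (rule C4')
  also have "\<dots> = smul (of_int ((int j + 1) * (int k - int l - int j)) + of_int (int k - int j - 1) - of_int (int l + int j + 1)) (v (Suc j))"
    unfolding IH ExEu lin_smul[OF lin_udx] vS(2)[symmetric] smul_add smul_diff by (rule refl)
  also have "\<dots> = smul (of_int ((int (Suc j) + 1) * (int k - int l - int (Suc j)))) (v (Suc j))"
    by (rule arg_cong[of _ _ "\<lambda>c. smul c _"]) (simp add: algebra_simps)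
  finally show ?case .
qed

lemma v_vanish: "l \<le> k \<Longrightarrow> v (k - l + 1) = 0"
proof (rule ccontr)
  assume lk: "l \<le> k" and nz: "v (k - l + 1) \<noteq> 0"
  have "v (k - l + 1 + i) \<noteq> 0" if "i \<le> l" for i
    using that
  proof (induction i)
    case 0 then show ?case using nz by (metis add_0_right)
  next
    case (Suc i)
    define j where "j = k - l + 1 + i"
    have jk: "j \<le> k" using Suc.prems lk unfolding j_def by simp
    have vj: "v j \<noteq> 0" unfolding j_def by (rule Suc.IH) (use Suc.prems in simp)
    have "int j + 1 > 0" "int k - int l - int j < 0" using lk unfolding j_def by auto
    then have "(int j + 1) * (int k - int l - int j) \<noteq> 0" by (metis mult_pos_neg less_irrefl)
    then have cnz: "of_int ((int j + 1) * (int k - int l - int j)) \<noteq> (0::complex)"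
      by (metis of_int_eq_0_iff)
    have "x_du m (v (Suc j)) \<noteq> 0" unfolding xdu_chain[OF jk] by (rule smul_nz[OF cnz vj])
    then have "v (Suc j) \<noteq> 0" by (auto simp: lin_zero[OF lin_xdu])
    then show ?case unfolding j_def by (simp add: zero_fun_def)
  qed
  from this[of l] have "v (Suc k) \<noteq> 0" using lk by (simp add: Suc_diff_le)
  moreover have "v k \<in> Pspace m 0 (l + k)" using chain[of k] by simp
  moreover have "v (Suc k) = u_dx m (v k)" by simp
  ultimately show False using udx_zero_deg by metis
qed

lemma v_nonvanish: "l \<le> k \<Longrightarrow> P \<noteq> 0 \<Longrightarrow> j \<le> k - l \<Longrightarrow> v j \<noteq> 0"
proof (induction j)
  case 0 then show ?case by simp
next
  case (Suc j)
  have vj: "v j \<noteq> 0" by (rule Suc.IH) (use Suc.prems in auto)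
  have jk: "j \<le> k" using Suc.prems by simp
  have "int j + 1 > 0" "int k - int l - int j > 0" using Suc.prems by auto
  then have "(int j + 1) * (int k - int l - int j) \<noteq> 0" by (metis mult_pos_pos less_irrefl)
  then have cnz: "of_int ((int j + 1) * (int k - int l - int j)) \<noteq> (0::complex)"
    by (metis of_int_eq_0_iff)
  have "x_du m (v (Suc j)) \<noteq> 0" unfolding xdu_chain[OF jk] by (rule smul_nz[OF cnz vj])
  then show "v (Suc j) \<noteq> 0" by (auto simp: lin_zero[OF lin_xdu])
qed

end

theorem lemma4p1:
  fixes m k l :: nat
  assumes "m > 4" and "l \<le> k"
  shows "(\<forall>P \<in> Hspace m k l. S_u_pow m (k - l + 1) k l P = 0)
     \<and> (\<forall>j \<le> k - l. \<exists>P \<in> Hspace m k l. S_u_pow m j k l P \<noteq> 0)"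
proof
  show "\<forall>P \<in> Hspace m k l. S_u_pow m (k - l + 1) k l P = 0"
  proof
    fix P assume P: "P \<in> Hspace m k l"
    show "S_u_pow m (k - l + 1) k l P = 0"
      unfolding Su_pow_v[OF P] by (rule v_vanish[OF P assms(2)])
  qed
  obtain P where P: "P \<in> Hspace m k l" "P \<noteq> 0" using witness[OF assms(1) assms(2)] by blast
  show "\<forall>j \<le> k - l. \<exists>P \<in> Hspace m k l. S_u_pow m j k l P \<noteq> 0"
  proof (intro allI impI)
    fix j assume j: "j \<le> k - l"
    show "\<exists>P \<in> Hspace m k l. S_u_pow m j k l P \<noteq> 0"
    proof (rule bexI[OF _ P(1)])
      show "S_u_pow m j k l P \<noteq> 0"
        unfolding Su_pow_v[OF P(1)] by (rule v_nonvanish[OF P(1) assms(2) P(2) j])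
    qed
  qed
qed

end
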